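(* Let $N$ be a finitely generated torsion-free nilpotent group and let $\phi\in\mathrm{Aut}(N)$ be such that the induced automorphism of $H_1(N,\mathbb{Q})$ is unipotent. Then $K_{\phi}=1$.
   Context: For a finitely generated group $G$ with finite generating set $S$, $\ell=\ell_S$ denotes word length with respect to $S$. For $\phi\in\mathrm{Aut}(G)$, the entropy of $\phi$ is $K_{\phi}=\max_{s\in S}\lim_{n\to\infty}\ell(\phi^n(s))^{1/n}$; it is independent of $S$. A linear automorphism $A$ is unipotent if $A-I$ is nilpotent. *)

theory Defs
  imports Complex_Main "HOL-Algebra.Algebra"
begin

text \<open>Lower central series: gamma_1 = G (index 0 here), gamma_{i+1} = [G, gamma_i].\<close>
fun lower_central :: "('a, 'b) monoid_scheme \<Rightarrow> nat \<Rightarrow> 'a set" where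
  "lower_central G 0 = carrier G"
| "lower_central G (Suc n) =
     generate G (\<Union>x \<in> carrier G. \<Union>y \<in> lower_central G n.
                   {x \<otimes>\<^bsub>G\<^esub> y \<otimes>\<^bsub>G\<^esub> inv\<^bsub>G\<^esub> x \<otimes>\<^bsub>G\<^esub> inv\<^bsub>G\<^esub> y})"

definition nilpotent_group :: "('a, 'b) monoid_scheme \<Rightarrow> bool" where
  "nilpotent_group G \<longleftrightarrow> group G \<and> (\<exists>c. lower_central G c = {\<one>\<^bsub>G\<^esub>})"

definition torsion_free_group :: "('a, 'b) monoid_scheme \<Rightarrow> bool" where
  "torsion_free_group G \<longleftrightarrow>
     (\<forall>x \<in> carrier G. \<forall>n::nat. n > 0 \<longrightarrow> x [^]\<^bsub>G\<^esub> n = \<one>\<^bsub>G\<^esub> \<longrightarrow> x = \<one>\<^bsub>G\<^esub>)"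

definition finitely_generated_group :: "('a, 'b) monoid_scheme \<Rightarrow> bool" where
  "finitely_generated_group G \<longleftrightarrow>
     (\<exists>S. finite S \<and> S \<subseteq> carrier G \<and> generate G S = carrier G)"

text \<open>H_1(G, Z) = abelianization G / [G,G] (as a quotient group of cosets).\<close>
definition abelianization :: "('a, 'b) monoid_scheme \<Rightarrow> 'a set monoid" where
  "abelianization G = G Mod (derived G (carrier G))"

text \<open>Map induced by phi on the abelianization: the coset [G,G] x maps to its image,
  which is the coset [G,G] (phi x) when phi is an automorphism.\<close>
definition induced_ab :: "('a \<Rightarrow> 'a) \<Rightarrow> 'a set \<Rightarrow> 'a set" where
  "induced_ab \<phi> C = \<phi> ` C"

text \<open>For an endomorphism psi of an abelian group A (written multiplicatively), the induced
  map on A \<otimes> Q is unipotent iff (psi - id)^k = 0 on A \<otimes> Q for some k, i.e. iff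
  (psi - id)^k maps every element of A to a torsion element.\<close>
definition rationally_unipotent :: "('c, 'd) monoid_scheme \<Rightarrow> ('c \<Rightarrow> 'c) \<Rightarrow> bool" where
  "rationally_unipotent A \<psi> \<longleftrightarrow>
     (\<exists>k::nat. \<forall>c \<in> carrier A. \<exists>m::nat. m > 0 \<and>
        (((\<lambda>x. \<psi> x \<otimes>\<^bsub>A\<^esub> inv\<^bsub>A\<^esub> x) ^^ k) c) [^]\<^bsub>A\<^esub> m = \<one>\<^bsub>A\<^esub>)"

definition word_length :: "('a, 'b) monoid_scheme \<Rightarrow> 'a set \<Rightarrow> 'a \<Rightarrow> nat" where
  "word_length G S g = (LEAST n. \<exists>ws. length ws = n \<and> set ws \<subseteq> S \<union> m_inv G ` S \<and>
                                       foldr (\<otimes>\<^bsub>G\<^esub>) ws \<one>\<^bsub>G\<^esub> = g)"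

definition growth_seq :: "('a, 'b) monoid_scheme \<Rightarrow> 'a set \<Rightarrow> ('a \<Rightarrow> 'a) \<Rightarrow> 'a \<Rightarrow> nat \<Rightarrow> real" where
  "growth_seq G S \<phi> s n = real (word_length G S ((\<phi> ^^ n) s)) powr (1 / real n)"

definition aut_entropy :: "('a, 'b) monoid_scheme \<Rightarrow> 'a set \<Rightarrow> ('a \<Rightarrow> 'a) \<Rightarrow> real" where
  "aut_entropy G S \<phi> = Max ((\<lambda>s. lim (growth_seq G S \<phi> s)) ` S)"

end

theory Submission
  imports Defs "HOL-Real_Asymp.Real_Asymp"
begin

definition cm :: "('a, 'b) monoid_scheme \<Rightarrow> 'a \<Rightarrow> 'a \<Rightarrow> 'a" where
  "cm G x y = x \<otimes>\<^bsub>G\<^esub> y \<otimes>\<^bsub>G\<^esub> inv\<^bsub>G\<^esub> x \<otimes>\<^bsub>G\<^esub> inv\<^bsub>G\<^esub> y"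

context group begin

lemma cancel1 [simp]: "x \<in> carrier G \<Longrightarrow> y \<in> carrier G \<Longrightarrow> x \<otimes> (inv x \<otimes> y) = y"
  by (simp add: m_assoc[symmetric])
lemma cancel2 [simp]: "x \<in> carrier G \<Longrightarrow> y \<in> carrier G \<Longrightarrow> inv x \<otimes> (x \<otimes> y) = y"
  by (simp add: m_assoc[symmetric])

lemmas grp = m_assoc inv_mult_group r_inv l_inv

lemma cm_closed [simp]: "x \<in> carrier G \<Longrightarrow> y \<in> carrier G \<Longrightarrow> cm G x y \<in> carrier G"
  by (simp add: cm_def)

lemma cm_inv: "x \<in> carrier G \<Longrightarrow> y \<in> carrier G \<Longrightarrow> inv (cm G x y) = cm G y x"
  by (simp add: cm_def grp)

lemma hall_witt:
  assumes [simp]: "x \<in> carrier G" "y \<in> carrier G" "z \<in> carrier G"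
  shows "(inv y \<otimes> cm G (cm G y (inv x)) (inv z) \<otimes> y) \<otimes>
         (inv z \<otimes> cm G (cm G z (inv y)) (inv x) \<otimes> z) \<otimes>
         (inv x \<otimes> cm G (cm G x (inv z)) (inv y) \<otimes> x) = \<one>"
  by (simp add: cm_def grp)

lemma lc_sub: "lower_central G n \<subseteq> carrier G"
proof (induction n)
  case 0 then show ?case by simp
next
  case (Suc n)
  show ?case unfolding lower_central.simps
    by (rule generate_incl) (use Suc in \<open>auto intro!: m_closed inv_closed\<close>)
qed

lemma lc_carrier: "y \<in> lower_central G n \<Longrightarrow> y \<in> carrier G"
  using lc_sub by blast

lemma lc_subgroup: "subgroup (lower_central G n) G"
proof (cases n)
  case 0 then show ?thesis by (simp add: subgroup_self)
next
  case (Suc m)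
  show ?thesis unfolding Suc lower_central.simps
    by (rule generate_is_subgroup) (auto dest: lc_carrier)
qed

lemma lc_gen: "x \<in> carrier G \<Longrightarrow> y \<in> lower_central G n \<Longrightarrow> cm G x y \<in> lower_central G (Suc n)"
  unfolding lower_central.simps cm_def by (rule generate.incl) blast

lemma lc_gen': "x \<in> carrier G \<Longrightarrow> y \<in> lower_central G n \<Longrightarrow> cm G y x \<in> lower_central G (Suc n)"
proof -
  assume a: "x \<in> carrier G" "y \<in> lower_central G n"
  have y: "y \<in> carrier G" using a lc_sub by blast
  have "inv (cm G x y) \<in> lower_central G (Suc n)"
    using subgroup.m_inv_closed[OF lc_subgroup lc_gen[OF a]] .
  then show ?thesis using cm_inv[OF a(1) y] by simp
qed

lemma lc_normal: "lower_central G n \<lhd> G"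
proof (induction n)
  case 0 then show ?case by (simp add: normal_self)
next
  case (Suc n)
  show ?case unfolding lower_central.simps
  proof (rule normal_generateI)
    show "(\<Union>x\<in>carrier G. \<Union>y\<in>lower_central G n. {x \<otimes> y \<otimes> inv x \<otimes> inv y}) \<subseteq> carrier G"
      by (auto dest: lc_carrier)
  next
    fix h g assume h: "h \<in> (\<Union>x\<in>carrier G. \<Union>y\<in>lower_central G n. {x \<otimes> y \<otimes> inv x \<otimes> inv y})"
      and g: "g \<in> carrier G"
    then obtain x y where x: "x \<in> carrier G" and y: "y \<in> lower_central G n" and hx: "h = x \<otimes> y \<otimes> inv x \<otimes> inv y" by blast
    have yc: "y \<in> carrier G" using y lc_sub by blast
    have y': "g \<otimes> y \<otimes> inv g \<in> lower_central G n"
      using Suc y g by (simp add: normal.inv_op_closed2)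
    have x': "g \<otimes> x \<otimes> inv g \<in> carrier G" using x g by simp
    have "g \<otimes> h \<otimes> inv g = (g \<otimes> x \<otimes> inv g) \<otimes> (g \<otimes> y \<otimes> inv g) \<otimes> inv (g \<otimes> x \<otimes> inv g) \<otimes> inv (g \<otimes> y \<otimes> inv g)"
      using x yc g by (simp add: hx grp)
    then show "g \<otimes> h \<otimes> inv g \<in> (\<Union>x\<in>carrier G. \<Union>y\<in>lower_central G n. {x \<otimes> y \<otimes> inv x \<otimes> inv y})"
      using x' y' by blast
  qed
qed

lemma lc_mono_Suc: "lower_central G (Suc n) \<subseteq> lower_central G n"
proof -
  have "(\<Union>x\<in>carrier G. \<Union>y\<in>lower_central G n. {x \<otimes> y \<otimes> inv x \<otimes> inv y}) \<subseteq> lower_central G n"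
  proof clarify
    fix x y assume x: "x \<in> carrier G" and y: "y \<in> lower_central G n"
    have a: "x \<otimes> y \<otimes> inv x \<in> lower_central G n" by (rule normal.inv_op_closed2[OF lc_normal x y])
    have b: "inv y \<in> lower_central G n" by (rule subgroup.m_inv_closed[OF lc_subgroup y])
    show "x \<otimes> y \<otimes> inv x \<otimes> inv y \<in> lower_central G n"
      by (rule subgroup.m_closed[OF lc_subgroup a b])
  qed
  then show ?thesis unfolding lower_central.simps(2) by (rule generate_subgroup_incl[OF _ lc_subgroup])
qed

lemma lc_mono: "m \<le> n \<Longrightarrow> lower_central G n \<subseteq> lower_central G m"
proof (induction n rule: dec_induct)
  case base then show ?case by simp
next
  case (step k) then show ?case using lc_mono_Suc[of k] by (meson order_trans)
qed

lemma lc_hom: assumes phi: "\<phi> \<in> hom G G" shows "\<phi> ` lower_central G n \<subseteq> lower_central G n"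
proof (induction n)
  case 0 then show ?case using phi by (auto simp: hom_def)
next
  case (Suc n)
  interpret gh: group_hom G G \<phi> using phi by (unfold_locales) auto
  let ?D = "\<Union>x\<in>carrier G. \<Union>y\<in>lower_central G n. {x \<otimes> y \<otimes> inv x \<otimes> inv y}"
  have D: "?D \<subseteq> carrier G" by (auto dest: lc_carrier)
  have "\<phi> ` generate G ?D = generate G (\<phi> ` ?D)" using gh.generate_img[OF D] by simp
  also have "\<dots> \<subseteq> generate G ?D"
  proof (rule mono_generate, clarify)
    fix x y assume x: "x \<in> carrier G" and y: "y \<in> lower_central G n"
    have yc: "y \<in> carrier G" using y lc_sub by blast
    have "\<phi> (x \<otimes> y \<otimes> inv x \<otimes> inv y) = \<phi> x \<otimes> \<phi> y \<otimes> inv \<phi> x \<otimes> inv \<phi> y"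
      using x yc by simp
    moreover have "\<phi> x \<in> carrier G" using x by simp
    moreover have "\<phi> y \<in> lower_central G n" using Suc y by blast
    ultimately show "\<phi> (x \<otimes> y \<otimes> inv x \<otimes> inv y) \<in> ?D" by blast
  qed
  finally show ?case by (simp only: lower_central.simps)
qed

end

locale pgroup = group G for G (structure) +
  fixes S :: "'a set" and \<phi> :: "'a \<Rightarrow> 'a"
  assumes S_sub: "S \<subseteq> carrier G"
    and gen: "generate G S = carrier G"
    and phi: "\<phi> \<in> hom G G"
begin

lemma foldr_closed: "set ws \<subseteq> carrier G \<Longrightarrow> foldr (\<otimes>) ws \<one> \<in> carrier G"
  by (induction ws) auto

lemma foldr_acc: "set xs \<subseteq> carrier G \<Longrightarrow> a \<in> carrier G \<Longrightarrow>
   foldr (\<otimes>) xs a = foldr (\<otimes>) xs \<one> \<otimes> a"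
proof (induction xs)
  case Nil then show ?case by simp
next
  case (Cons x xs)
  have IH: "foldr (\<otimes>) xs a = foldr (\<otimes>) xs \<one> \<otimes> a" by (rule Cons.IH) (use Cons.prems in auto)
  have c: "x \<in> carrier G" "foldr (\<otimes>) xs \<one> \<in> carrier G" using Cons.prems foldr_closed by auto
  show ?case using IH c Cons.prems by (simp add: m_assoc)
qed

lemma foldr_app: "set xs \<subseteq> carrier G \<Longrightarrow> set ys \<subseteq> carrier G \<Longrightarrow>
   foldr (\<otimes>) (xs @ ys) \<one> = foldr (\<otimes>) xs \<one> \<otimes> foldr (\<otimes>) ys \<one>"
  using foldr_acc[of xs "foldr (\<otimes>) ys \<one>"] foldr_closed[of ys] by simp

lemma foldr_rev_inv: "set xs \<subseteq> carrier G \<Longrightarrow>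
   foldr (\<otimes>) (rev (map (m_inv G) xs)) \<one> = inv (foldr (\<otimes>) xs \<one>)"
proof (induction xs)
  case Nil then show ?case by simp
next
  case (Cons a xs)
  have c: "set (rev (map (m_inv G) xs)) \<subseteq> carrier G" "set [inv a] \<subseteq> carrier G" using Cons.prems by auto
  have "foldr (\<otimes>) (rev (map (m_inv G) (a # xs))) \<one> = foldr (\<otimes>) (rev (map (m_inv G) xs)) \<one> \<otimes> foldr (\<otimes>) [inv a] \<one>"
    using foldr_app[OF c] by simp
  also have "\<dots> = inv (foldr (\<otimes>) xs \<one>) \<otimes> inv a" using Cons by simp
  also have "\<dots> = inv (a \<otimes> foldr (\<otimes>) xs \<one>)" using Cons.prems by (simp add: inv_mult_group foldr_closed)
  finally show ?case by simp
qed

definition "W = S \<union> m_inv G ` S"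

lemma W_sub: "W \<subseteq> carrier G" using S_sub by (auto simp: W_def)

lemma word_exists: "g \<in> carrier G \<Longrightarrow> \<exists>ws. set ws \<subseteq> W \<and> foldr (\<otimes>) ws \<one> = g"
proof -
  assume "g \<in> carrier G"
  then have "g \<in> generate G S" using gen by simp
  then show ?thesis
  proof (induction rule: generate.induct)
    case one then show ?case by (intro exI[of _ "[]"]) simp
  next
    case (incl h) then show ?case using S_sub by (intro exI[of _ "[h]"]) (auto simp: W_def)
  next
    case (inv h) then show ?case using S_sub by (intro exI[of _ "[inv h]"]) (auto simp: W_def)
  next
    case (eng h1 h2)
    then obtain w1 w2 where "set w1 \<subseteq> W" "foldr (\<otimes>) w1 \<one> = h1" "set w2 \<subseteq> W" "foldr (\<otimes>) w2 \<one> = h2" by blast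
    moreover have "set w1 \<subseteq> carrier G" "set w2 \<subseteq> carrier G" using calculation W_sub by auto
    ultimately show ?case using foldr_app[of w1 w2] by (intro exI[of _ "w1 @ w2"]) auto
  qed
qed

lemma wl_def': "word_length G S g = (LEAST n. \<exists>ws. length ws = n \<and> set ws \<subseteq> W \<and> foldr (\<otimes>) ws \<one> = g)"
  by (simp add: word_length_def W_def)

lemma wl_spec: "g \<in> carrier G \<Longrightarrow> \<exists>ws. length ws = word_length G S g \<and> set ws \<subseteq> W \<and> foldr (\<otimes>) ws \<one> = g"
proof -
  assume "g \<in> carrier G"
  then obtain ws where "set ws \<subseteq> W \<and> foldr (\<otimes>) ws \<one> = g" using word_exists by blast
  then have "\<exists>n ws. length ws = n \<and> set ws \<subseteq> W \<and> foldr (\<otimes>) ws \<one> = g" by blast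
  then show ?thesis unfolding wl_def' by (rule LeastI_ex)
qed

lemma wl_le: "set ws \<subseteq> W \<Longrightarrow> word_length G S (foldr (\<otimes>) ws \<one>) \<le> length ws"
  unfolding wl_def' by (rule Least_le) blast

lemma wl_one: "word_length G S \<one> = 0"
  using wl_le[of "[]"] by simp

lemma wl_mult: assumes "x \<in> carrier G" "y \<in> carrier G"
  shows "word_length G S (x \<otimes> y) \<le> word_length G S x + word_length G S y"
proof -
  obtain w1 where w1: "length w1 = word_length G S x" "set w1 \<subseteq> W" "foldr (\<otimes>) w1 \<one> = x" using wl_spec[OF assms(1)] by blast
  obtain w2 where w2: "length w2 = word_length G S y" "set w2 \<subseteq> W" "foldr (\<otimes>) w2 \<one> = y" using wl_spec[OF assms(2)] by blast
  have "foldr (\<otimes>) (w1 @ w2) \<one> = x \<otimes> y" using w1 w2 W_sub foldr_app[of w1 w2] by auto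
  moreover have "set (w1 @ w2) \<subseteq> W" using w1 w2 by simp
  ultimately show ?thesis using wl_le[of "w1 @ w2"] w1 w2 by simp
qed

lemma wl_inv: assumes "x \<in> carrier G" shows "word_length G S (inv x) \<le> word_length G S x"
proof -
  obtain w1 where w1: "length w1 = word_length G S x" "set w1 \<subseteq> W" "foldr (\<otimes>) w1 \<one> = x" using wl_spec[OF assms(1)] by blast
  have c: "set w1 \<subseteq> carrier G" using w1 W_sub by blast
  have "set (rev (map (m_inv G) w1)) \<subseteq> W"
  proof
    fix z assume "z \<in> set (rev (map (m_inv G) w1))"
    then obtain a where a: "a \<in> set w1" "z = inv a" by auto
    then have "a \<in> W" using w1 by blast
    then show "z \<in> W" unfolding W_def using a S_sub by auto
  qed
  moreover have "foldr (\<otimes>) (rev (map (m_inv G) w1)) \<one> = inv x" using foldr_rev_inv[OF c] w1 by simp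
  ultimately show ?thesis using wl_le[of "rev (map (m_inv G) w1)"] w1 by simp
qed

lemma wl_pos: assumes "x \<in> carrier G" "x \<noteq> \<one>" shows "1 \<le> word_length G S x"
proof (rule ccontr)
  assume "\<not> 1 \<le> word_length G S x"
  then have "word_length G S x = 0" by simp
  then obtain ws where "length ws = 0" "foldr (\<otimes>) ws \<one> = x" using wl_spec[OF assms(1)] by metis
  then show False using assms by simp
qed

lemma phin_hom: "(\<phi> ^^ n) \<in> hom G G"
proof (induction n)
  case 0 then show ?case by (simp add: hom_def)
next
  case (Suc n) then show ?case using phi by (auto simp: hom_def Pi_def)
qed

lemma phin_closed [simp]: "x \<in> carrier G \<Longrightarrow> (\<phi> ^^ n) x \<in> carrier G"
  using phin_hom by (auto simp: hom_def)
lemma phin_mult [simp]: "x \<in> carrier G \<Longrightarrow> y \<in> carrier G \<Longrightarrow> (\<phi> ^^ n) (x \<otimes> y) = (\<phi> ^^ n) x \<otimes> (\<phi> ^^ n) y"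
  using phin_hom by (auto simp: hom_def)
lemma phi_closed [simp]: "x \<in> carrier G \<Longrightarrow> \<phi> x \<in> carrier G"
  using phi by (auto simp: hom_def)
lemma phi_mult [simp]: "x \<in> carrier G \<Longrightarrow> y \<in> carrier G \<Longrightarrow> \<phi> (x \<otimes> y) = \<phi> x \<otimes> \<phi> y"
  using phi by (auto simp: hom_def)
lemma phin_inv [simp]: "x \<in> carrier G \<Longrightarrow> (\<phi> ^^ n) (inv x) = inv ((\<phi> ^^ n) x)"
  using phin_hom by (simp add: group_hom.hom_inv group_hom.intro group_hom_axioms.intro is_group)
lemma phi_inv [simp]: "x \<in> carrier G \<Longrightarrow> \<phi> (inv x) = inv (\<phi> x)"
  using phi by (simp add: group_hom.hom_inv group_hom.intro group_hom_axioms.intro is_group)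
lemma phin_one [simp]: "(\<phi> ^^ n) \<one> = \<one>"
  using phin_hom by (simp add: group_hom.hom_one group_hom.intro group_hom_axioms.intro is_group)
lemma phi_one [simp]: "\<phi> \<one> = \<one>"
  using phi by (simp add: group_hom.hom_one group_hom.intro group_hom_axioms.intro is_group)

definition Pol :: "'a set" where
  "Pol = {g \<in> carrier G. \<exists>C d. \<forall>n. word_length G S ((\<phi> ^^ n) g) \<le> C * (Suc n) ^ d}"

lemma pow_le_add: "(Suc n) ^ d1 \<le> (Suc n) ^ (d1 + d2)"
  by (rule power_increasing) auto

lemma comb_bound:
  assumes "a \<le> C1 * (Suc n) ^ d1" "b \<le> C2 * (Suc n) ^ d2"
  shows "a + b \<le> (C1 + C2) * (Suc n) ^ (d1 + d2)"
proof -
  have "C1 * (Suc n) ^ d1 \<le> C1 * (Suc n) ^ (d1 + d2)" by (rule mult_le_mono2[OF pow_le_add])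
  moreover have "C2 * (Suc n) ^ d2 \<le> C2 * (Suc n) ^ (d1 + d2)"
    using mult_le_mono2[OF pow_le_add[of n d2 d1]] by (simp add: add.commute)
  moreover have "(C1 + C2) * (Suc n) ^ (d1 + d2) = C1 * (Suc n) ^ (d1 + d2) + C2 * (Suc n) ^ (d1 + d2)"
    by (simp add: add_mult_distrib)
  ultimately show ?thesis using assms by linarith
qed

lemma mono_bound: "a \<le> C1 * (Suc n) ^ d1 \<Longrightarrow> C1 \<le> C \<Longrightarrow> d1 \<le> d \<Longrightarrow> a \<le> C * (Suc n) ^ d"
proof -
  assume a: "a \<le> C1 * (Suc n) ^ d1" "C1 \<le> C" "d1 \<le> d"
  have "C1 * (Suc n) ^ d1 \<le> C * (Suc n) ^ d"
    by (intro mult_le_mono a(2) power_increasing a(3)) auto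
  then show ?thesis using a(1) by linarith
qed

lemma Pol_one: "\<one> \<in> Pol"
  unfolding Pol_def by (auto simp: wl_one)

lemma Pol_mult: assumes "x \<in> Pol" "y \<in> Pol" shows "x \<otimes> y \<in> Pol"
proof -
  obtain C1 d1 where 1: "\<forall>n. word_length G S ((\<phi> ^^ n) x) \<le> C1 * (Suc n) ^ d1" and x: "x \<in> carrier G"
    using assms(1) unfolding Pol_def by blast
  obtain C2 d2 where 2: "\<forall>n. word_length G S ((\<phi> ^^ n) y) \<le> C2 * (Suc n) ^ d2" and y: "y \<in> carrier G"
    using assms(2) unfolding Pol_def by blast
  have "\<forall>n. word_length G S ((\<phi> ^^ n) (x \<otimes> y)) \<le> (C1 + C2) * (Suc n) ^ (d1 + d2)"
  proof
    fix n
    have "word_length G S ((\<phi> ^^ n) (x \<otimes> y)) \<le> word_length G S ((\<phi> ^^ n) x) + word_length G S ((\<phi> ^^ n) y)"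
      using wl_mult x y by simp
    also have "\<dots> \<le> (C1 + C2) * (Suc n) ^ (d1 + d2)" using 1 2 comb_bound by blast
    finally show "word_length G S ((\<phi> ^^ n) (x \<otimes> y)) \<le> (C1 + C2) * (Suc n) ^ (d1 + d2)" .
  qed
  then show ?thesis unfolding Pol_def using x y by blast
qed

lemma Pol_inv: assumes "x \<in> Pol" shows "inv x \<in> Pol"
proof -
  obtain C1 d1 where 1: "\<forall>n. word_length G S ((\<phi> ^^ n) x) \<le> C1 * (Suc n) ^ d1" and x: "x \<in> carrier G"
    using assms(1) unfolding Pol_def by blast
  have "\<forall>n. word_length G S ((\<phi> ^^ n) (inv x)) \<le> C1 * (Suc n) ^ d1"
  proof
    fix n
    have "word_length G S ((\<phi> ^^ n) (inv x)) \<le> word_length G S ((\<phi> ^^ n) x)"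
      using wl_inv[of "(\<phi> ^^ n) x"] x by simp
    then show "word_length G S ((\<phi> ^^ n) (inv x)) \<le> C1 * (Suc n) ^ d1" using 1 le_trans by blast
  qed
  then show ?thesis unfolding Pol_def using x by blast
qed

lemma Pol_sub: "Pol \<subseteq> carrier G" by (auto simp: Pol_def)

lemma Pol_subgroup: "subgroup Pol G"
  by (rule subgroupI) (use Pol_sub Pol_one in \<open>auto intro: Pol_mult Pol_inv\<close>)

lemma Pol_uniform: "finite A \<Longrightarrow> A \<subseteq> Pol \<Longrightarrow> \<exists>C d. \<forall>a\<in>A. \<forall>n. word_length G S ((\<phi> ^^ n) a) \<le> C * (Suc n) ^ d"
proof (induction A rule: finite_induct)
  case empty then show ?case by simp
next
  case (insert a A)
  then obtain C1 d1 where 1: "\<forall>b\<in>A. \<forall>n. word_length G S ((\<phi> ^^ n) b) \<le> C1 * (Suc n) ^ d1" by auto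
  obtain C2 d2 where 2: "\<forall>n. word_length G S ((\<phi> ^^ n) a) \<le> C2 * (Suc n) ^ d2"
    using insert.prems unfolding Pol_def by blast
  have "\<forall>b\<in>insert a A. \<forall>n. word_length G S ((\<phi> ^^ n) b) \<le> (C1 + C2) * (Suc n) ^ (d1 + d2)"
  proof (intro ballI allI)
    fix b n assume "b \<in> insert a A"
    then show "word_length G S ((\<phi> ^^ n) b) \<le> (C1 + C2) * (Suc n) ^ (d1 + d2)"
    proof
      assume "b = a"
      then show ?thesis using mono_bound[OF 2[rule_format, of n] le_add2 le_add2] by simp
    next
      assume "b \<in> A"
      then show ?thesis using mono_bound[OF 1[rule_format, of b n] le_add1 le_add1] by simp
    qed
  qed
  then show ?case by blast
qed

lemma Pol_growth:
  assumes F: "finite F" "F \<subseteq> carrier G" and sig: "\<And>x. x \<in> F \<Longrightarrow> \<sigma> x \<in> F"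
    and step: "\<And>x. x \<in> F \<Longrightarrow> \<exists>y\<in>Pol. \<phi> x = y \<otimes> \<sigma> x"
  shows "F \<subseteq> Pol"
proof -
  have "\<forall>x\<in>F. \<exists>y. y \<in> Pol \<and> \<phi> x = y \<otimes> \<sigma> x" using step by blast
  then obtain yf where yf0: "\<forall>x\<in>F. yf x \<in> Pol \<and> \<phi> x = yf x \<otimes> \<sigma> x"
    using bchoice[of F "\<lambda>x y. y \<in> Pol \<and> \<phi> x = y \<otimes> \<sigma> x"] by blast
  have yf: "\<And>x. x \<in> F \<Longrightarrow> yf x \<in> Pol \<and> \<phi> x = yf x \<otimes> \<sigma> x" using yf0 by blast
  obtain C d where Cd: "\<forall>a\<in>yf ` F. \<forall>n. word_length G S ((\<phi> ^^ n) a) \<le> C * (Suc n) ^ d"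
    using Pol_uniform[of "yf ` F"] F yf by blast
  define M where "M = (\<Sum>x\<in>F. word_length G S x)"
  have Mx: "word_length G S x \<le> M" if "x \<in> F" for x
    unfolding M_def using F(1) that by (intro member_le_sum) auto
  have claim: "\<forall>x\<in>F. word_length G S ((\<phi> ^^ n) x) \<le> M + n * C * (Suc n) ^ d" for n
  proof (induction n)
    case 0 then show ?case using Mx by simp
  next
    case (Suc n)
    show ?case
    proof
      fix x assume x: "x \<in> F"
      have xc: "x \<in> carrier G" "\<sigma> x \<in> carrier G" "yf x \<in> carrier G" using x F sig yf unfolding Pol_def by auto
      have "(\<phi> ^^ Suc n) x = (\<phi> ^^ n) (\<phi> x)" by (simp only: funpow_Suc_right comp_def)
      also have "\<dots> = (\<phi> ^^ n) (yf x) \<otimes> (\<phi> ^^ n) (\<sigma> x)" using yf[OF x] xc by simp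
      finally have eq: "(\<phi> ^^ Suc n) x = (\<phi> ^^ n) (yf x) \<otimes> (\<phi> ^^ n) (\<sigma> x)" .
      have "word_length G S ((\<phi> ^^ Suc n) x) \<le> word_length G S ((\<phi> ^^ n) (yf x)) + word_length G S ((\<phi> ^^ n) (\<sigma> x))"
        unfolding eq using wl_mult xc by simp
      also have "\<dots> \<le> C * (Suc n) ^ d + (M + n * C * (Suc n) ^ d)"
        using Cd x Suc.IH sig[OF x] by (intro add_le_mono) auto
      also have "\<dots> = M + Suc n * C * (Suc n) ^ d" by (simp add: algebra_simps)
      also have "\<dots> \<le> M + Suc n * C * (Suc (Suc n)) ^ d"
        by (intro add_le_mono mult_le_mono2 power_mono) auto
      finally show "word_length G S ((\<phi> ^^ Suc n) x) \<le> M + Suc n * C * (Suc (Suc n)) ^ d" .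
    qed
  qed
  show ?thesis
  proof
    fix x assume x: "x \<in> F"
    have "\<forall>n. word_length G S ((\<phi> ^^ n) x) \<le> (M + C) * (Suc n) ^ Suc d"
    proof
      fix n
      have "1 \<le> (Suc n) ^ Suc d" using one_le_power[of "Suc n" "Suc d"] by linarith
      then have a: "M \<le> M * (Suc n) ^ Suc d" using mult_le_mono2[of 1 "(Suc n) ^ Suc d" M] by simp
      have b: "n * C * (Suc n) ^ d \<le> C * (Suc n) ^ Suc d"
      proof -
        have "n * C * (Suc n) ^ d \<le> Suc n * C * (Suc n) ^ d" by (intro mult_le_mono1) auto
        also have "\<dots> = C * (Suc n) ^ Suc d" by (simp add: algebra_simps)
        finally show ?thesis .
      qed
      have "word_length G S ((\<phi> ^^ n) x) \<le> M + n * C * (Suc n) ^ d" using claim x by blast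
      also have "\<dots> \<le> M * (Suc n) ^ Suc d + C * (Suc n) ^ Suc d" using a b by (rule add_le_mono)
      also have "\<dots> = (M + C) * (Suc n) ^ Suc d" by (simp add: add_mult_distrib)
      finally show "word_length G S ((\<phi> ^^ n) x) \<le> (M + C) * (Suc n) ^ Suc d" .
    qed
    then show "x \<in> Pol" unfolding Pol_def using x F by blast
  qed
qed

end

context group begin

lemma gen_insert_decomp:
  assumes a: "a \<in> carrier G" and F: "F \<subseteq> carrier G"
    and comm: "\<forall>u\<in>generate G (insert a F). \<forall>v\<in>generate G (insert a F). u \<otimes> v = v \<otimes> u"
  shows "generate G (insert a F) \<subseteq> {b \<otimes> a [^] (j::int) | b j. b \<in> generate G F}"
proof -
  let ?M = "generate G F" and ?M' = "generate G (insert a F)"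
  let ?X = "{b \<otimes> a [^] (j::int) | b j. b \<in> generate G F}"
  have M: "subgroup ?M G" using generate_is_subgroup[OF F] .
  have M': "subgroup ?M' G" by (rule generate_is_subgroup) (use a F in auto)
  have MM': "?M \<subseteq> ?M'" by (rule mono_generate) (rule subset_insertI)
  have aM': "a \<in> ?M'" by (rule generate.incl) simp
  have powM': "a [^] (j::int) \<in> ?M'" for j using subgroup_int_pow_closed[OF M' aM'] .
  have Mc: "b \<in> ?M \<Longrightarrow> b \<in> carrier G" for b by (rule subgroup.mem_carrier[OF M])
  have "subgroup ?X G"
  proof (rule subgroupI)
    show "?X \<subseteq> carrier G" using Mc a by auto
    have "\<one> \<otimes> a [^] (0::int) \<in> ?X" using generate.one[of G F] by blast
    then show "?X \<noteq> {}" by blast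
  next
    fix x assume "x \<in> ?X"
    then obtain b j where bj: "b \<in> ?M" "x = b \<otimes> a [^] (j::int)" by blast
    have bc: "b \<in> carrier G" using bj Mc by blast
    have ib: "inv b \<in> ?M" by (rule subgroup.m_inv_closed[OF M bj(1)])
    have "inv x = inv (a [^] j) \<otimes> inv b" using bj bc a by (simp add: inv_mult_group)
    also have "\<dots> = a [^] (-j) \<otimes> inv b" using a by (simp add: int_pow_neg)
    also have "\<dots> = inv b \<otimes> a [^] (-j)" using comm powM'[of "-j"] ib MM' by blast
    finally show "inv x \<in> ?X" using ib by blast
  next
    fix x y assume "x \<in> ?X" "y \<in> ?X"
    then obtain b j b' j' where bj: "b \<in> ?M" "x = b \<otimes> a [^] (j::int)" "b' \<in> ?M" "y = b' \<otimes> a [^] (j'::int)" by blast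
    have bc: "b \<in> carrier G" "b' \<in> carrier G" using bj Mc by blast+
    have sw: "a [^] j \<otimes> b' = b' \<otimes> a [^] j" using comm powM'[of j] bj(3) MM' by blast
    have "x \<otimes> y = b \<otimes> (a [^] j \<otimes> b') \<otimes> a [^] j'" using bj bc a by (simp add: m_assoc)
    also have "\<dots> = (b \<otimes> b') \<otimes> (a [^] j \<otimes> a [^] j')" unfolding sw using bc a by (simp add: m_assoc)
    also have "\<dots> = (b \<otimes> b') \<otimes> a [^] (j + j')" using a by (simp add: int_pow_mult)
    finally have xy: "x \<otimes> y = (b \<otimes> b') \<otimes> a [^] (j + j')" .
    have "b \<otimes> b' \<in> ?M" by (rule subgroup.m_closed[OF M bj(1) bj(3)])
    then show "x \<otimes> y \<in> ?X" unfolding xy by blast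
  qed
  moreover have "insert a F \<subseteq> ?X"
  proof
    fix x assume "x \<in> insert a F"
    then show "x \<in> ?X"
    proof
      assume "x = a"
      have "\<one> \<otimes> a [^] (1::int) \<in> ?X" using generate.one[of G F] by blast
      then show ?thesis using a \<open>x = a\<close> by simp
    next
      assume "x \<in> F"
      then have "x \<otimes> a [^] (0::int) \<in> ?X" using generate.incl[of x F G] by blast
      moreover have "x \<otimes> a [^] (0::int) = x" using F \<open>x \<in> F\<close> by auto
      ultimately show ?thesis by simp
    qed
  qed
  ultimately show ?thesis by (rule generate_subgroup_incl[rotated])
qed

lemma tors_finite:
  "finite F \<Longrightarrow> F \<subseteq> carrier G \<Longrightarrow>
   (\<forall>u\<in>generate G F. \<forall>v\<in>generate G F. u \<otimes> v = v \<otimes> u) \<Longrightarrow>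
   finite {x \<in> generate G F. \<exists>m::nat. m > 0 \<and> x [^] m = \<one>}"
proof (induction F rule: finite_induct)
  case empty
  then show ?case using generate_empty by (simp add: finite_subset[of _ "{\<one>}"])
next
  case (insert a F)
  let ?M = "generate G F" and ?M' = "generate G (insert a F)"
  define T where "T Y = {x \<in> Y. \<exists>m::nat. m > 0 \<and> x [^] m = \<one>}" for Y
  have a: "a \<in> carrier G" and F: "F \<subseteq> carrier G" using insert.prems by auto
  have MM': "?M \<subseteq> ?M'" by (rule mono_generate) (rule subset_insertI)
  have comm: "\<forall>u\<in>?M'. \<forall>v\<in>?M'. u \<otimes> v = v \<otimes> u" using insert.prems by blast
  have IH: "finite (T ?M)" using insert.IH F comm MM' unfolding T_def by blast
  have M: "subgroup ?M G" using generate_is_subgroup[OF F] .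
  have M': "subgroup ?M' G" by (rule generate_is_subgroup) (use a F in auto)
  have Mc: "b \<in> ?M \<Longrightarrow> b \<in> carrier G" for b by (rule subgroup.mem_carrier[OF M])
  have M'c: "b \<in> ?M' \<Longrightarrow> b \<in> carrier G" for b by (rule subgroup.mem_carrier[OF M'])
  have aM': "a \<in> ?M'" by (rule generate.incl) simp
  have decomp: "?M' \<subseteq> {b \<otimes> a [^] (j::int) | b j. b \<in> ?M}"
    using gen_insert_decomp[OF a F comm] .
  have "finite (T ?M')"
  proof (cases "\<exists>e::nat. e > 0 \<and> a [^] e \<in> ?M")
    case True
    then obtain e :: nat where e: "e > 0" "a [^] e \<in> ?M" by blast
    define Tr where "Tr r = {x \<in> T ?M'. \<exists>b\<in>?M. x = b \<otimes> a [^] (r::nat)}" for r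
    have cover: "T ?M' \<subseteq> (\<Union>r<e. Tr r)"
    proof
      fix x assume x: "x \<in> T ?M'"
      then obtain b j where bj: "b \<in> ?M" "x = b \<otimes> a [^] (j::int)" using decomp unfolding T_def by blast
      define q where "q = j div int e"
      define r where "r = j mod int e"
      have r: "0 \<le> r" "r < int e" using e unfolding r_def by auto
      have j: "j = int e * q + r" unfolding q_def r_def by simp
      have "a [^] j = (a [^] int e) [^] q \<otimes> a [^] r" using a by (simp add: j int_pow_mult int_pow_pow)
      also have "\<dots> = (a [^] e) [^] q \<otimes> a [^] (nat r)" using r by (simp add: int_pow_int pow_nat)
      finally have aj: "a [^] j = (a [^] e) [^] q \<otimes> a [^] (nat r)" .
      have b': "b \<otimes> (a [^] e) [^] q \<in> ?M"
        by (rule subgroup.m_closed[OF M bj(1) subgroup_int_pow_closed[OF M e(2)]])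
      have "x = (b \<otimes> (a [^] e) [^] q) \<otimes> a [^] (nat r)" using bj aj Mc a e by (simp add: m_assoc)
      then have "x \<in> Tr (nat r)" unfolding Tr_def using x b' by blast
      moreover have "nat r < e" using r by auto
      ultimately show "x \<in> (\<Union>r<e. Tr r)" by blast
    qed
    have finTr: "finite (Tr r)" for r
    proof (cases "Tr r = {}")
      case True then show ?thesis by simp
    next
      case False
      then obtain x0 where x0: "x0 \<in> Tr r" by blast
      then obtain b0 and m0 :: nat where b0: "b0 \<in> ?M" "x0 = b0 \<otimes> a [^] r" "x0 \<in> ?M'" "m0 > 0" "x0 [^] m0 = \<one>"
        unfolding Tr_def T_def by blast
      have x0c: "x0 \<in> carrier G" using b0 M'c by blast
      have "Tr r \<subseteq> (\<lambda>t. t \<otimes> x0) ` T ?M"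
      proof
        fix x assume "x \<in> Tr r"
        then obtain b and m :: nat where b: "b \<in> ?M" "x = b \<otimes> a [^] r" "x \<in> ?M'" "m > 0" "x [^] m = \<one>"
          unfolding Tr_def T_def by blast
        have bc: "b \<in> carrier G" "b0 \<in> carrier G" using b b0 Mc by blast+
        have xc: "x \<in> carrier G" using b M'c by blast
        have e1: "x \<otimes> inv x0 = b \<otimes> inv b0" using b b0 bc a by (simp add: inv_mult_group m_assoc)
        have e2: "b \<otimes> inv b0 \<in> ?M" by (rule subgroup.m_closed[OF M b(1) subgroup.m_inv_closed[OF M b0(1)]])
        have e3: "(x \<otimes> inv x0) [^] (m * m0) = \<one>"
        proof -
          have ix0: "inv x0 \<in> ?M'" by (rule subgroup.m_inv_closed[OF M' b0(3)])
          have "(x \<otimes> inv x0) [^] (m * m0) = x [^] (m * m0) \<otimes> (inv x0) [^] (m * m0)"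
            using comm b(3) ix0 xc x0c by (intro pow_mult_distrib) auto
          also have "\<dots> = (x [^] m) [^] m0 \<otimes> inv ((x0 [^] m0) [^] m)"
            using xc x0c by (simp add: nat_pow_pow nat_pow_inv mult.commute)
          also have "\<dots> = \<one>" using b b0 by simp
          finally show ?thesis .
        qed
        have e4: "m * m0 > 0" using b b0 by simp
        have xx0: "x = (x \<otimes> inv x0) \<otimes> x0" using xc x0c by (simp add: m_assoc)
        have "x \<otimes> inv x0 \<in> T ?M" unfolding T_def using e1 e2 e3 e4 by (auto intro!: exI[of _ "m * m0"])
        note this xx0
        then show "x \<in> (\<lambda>t. t \<otimes> x0) ` T ?M" by (rule rev_image_eqI)
      qed
      moreover have "finite ((\<lambda>t. t \<otimes> x0) ` T ?M)" using IH by (rule finite_imageI)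
      ultimately show ?thesis by (rule finite_subset)
    qed
    have "finite (\<Union>r<e. Tr r)" using finTr by simp
    then show ?thesis using cover by (rule finite_subset[rotated])
  next
    case False
    have "T ?M' \<subseteq> T ?M"
    proof
      fix x assume x: "x \<in> T ?M'"
      then obtain m :: nat where m: "m > 0" "x [^] m = \<one>" unfolding T_def by blast
      obtain b j where bj: "b \<in> ?M" "x = b \<otimes> a [^] (j::int)" using decomp x unfolding T_def by blast
      have bc: "b \<in> carrier G" using bj Mc by blast
      have bM': "b \<in> ?M'" using bj MM' by blast
      have pM': "a [^] j \<in> ?M'" using subgroup_int_pow_closed[OF M' aM'] .
      have "x [^] m = b [^] m \<otimes> (a [^] j) [^] m"
        unfolding bj(2) using comm bM' pM' bc a by (intro pow_mult_distrib) auto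
      also have "(a [^] j) [^] m = a [^] (j * int m)"
        using a int_pow_pow[of a j "int m"] by (simp add: int_pow_int)
      also have "b [^] m = b [^] (int m)" by (simp add: int_pow_int)
      finally have eq: "b [^] (int m) \<otimes> a [^] (j * int m) = \<one>" using m by simp
      have bm: "b [^] (int m) \<in> ?M" using subgroup_int_pow_closed[OF M bj(1)] .
      have "a [^] (j * int m) = inv (b [^] (int m)) \<otimes> (b [^] (int m) \<otimes> a [^] (j * int m))"
        using a bc by simp
      also have "\<dots> = inv (b [^] (int m))" using eq bc by simp
      finally have ajm: "a [^] (j * int m) \<in> ?M" using subgroup.m_inv_closed[OF M bm] by simp
      have "j * int m = 0"
      proof (rule ccontr)
        assume ne: "j * int m \<noteq> 0"
        show False
        proof (cases "j * int m > 0")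
          case True
          then have "a [^] (nat (j * int m)) \<in> ?M" using ajm by (simp add: pow_nat)
          then show False using False True by (metis zero_less_nat_eq)
        next
          case neg: False
          then have pos: "- (j * int m) > 0" using ne by linarith
          have "a [^] (- (j * int m)) = inv (a [^] (j * int m))" by (rule int_pow_neg[OF a])
          then have "a [^] (- (j * int m)) \<in> ?M" using subgroup.m_inv_closed[OF M ajm] by simp
          then have "a [^] (nat (- (j * int m))) \<in> ?M" using pos by (simp add: pow_nat)
          then show False using False pos by (metis zero_less_nat_eq)
        qed
      qed
      then have "j = 0" using m by simp
      then have "x = b" using bj bc by simp
      then show "x \<in> T ?M" using bj m unfolding T_def by blast
    qed
    then show ?thesis using IH by (rule finite_subset)
  qed
  then show ?case unfolding T_def .
qed

end

context group begin

lemma rel_tors: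
  assumes H: "H \<lhd> G" and F: "finite F" "F \<subseteq> carrier G"
    and comm: "\<forall>a\<in>generate G (F \<union> H). \<forall>b\<in>generate G (F \<union> H). cm G a b \<in> H"
  shows "\<exists>R. finite R \<and> R \<subseteq> {x \<in> generate G (F \<union> H). \<exists>m::nat. m > 0 \<and> x [^] m \<in> H} \<and>
     (\<forall>x\<in>generate G (F \<union> H). (\<exists>m::nat. m > 0 \<and> x [^] m \<in> H) \<longrightarrow> (\<exists>r\<in>R. \<exists>h\<in>H. x = h \<otimes> r))"
proof -
  interpret N: normal H G using H .
  let ?Q = "G Mod H"
  let ?p = "\<lambda>x. H #> x"
  let ?M = "generate G (F \<union> H)"
  let ?K = "generate ?Q (?p ` F)"
  define TM where "TM = {x \<in> generate G (F \<union> H). \<exists>m::nat. m > 0 \<and> x [^] m \<in> H}"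
  have Qg: "group ?Q" by (rule N.factorgroup_is_group)
  have ph: "group_hom G ?Q ?p"
    by (rule group_hom.intro[OF is_group Qg]) (rule group_hom_axioms.intro[OF N.r_coset_hom_Mod])
  interpret P: group_hom G ?Q ?p by (rule ph)
  have Hc: "H \<subseteq> carrier G" by (rule N.subset)
  have FH: "F \<union> H \<subseteq> carrier G" using F Hc by blast
  have Mc: "x \<in> ?M \<Longrightarrow> x \<in> carrier G" for x using generate_incl[OF FH] by blast
  have pone: "h \<in> H \<Longrightarrow> ?p h = \<one>\<^bsub>?Q\<^esub>" for h
    using N.rcos_const[OF is_group] by simp
  have peq: "x \<in> carrier G \<Longrightarrow> y \<in> carrier G \<Longrightarrow> ?p x = ?p y \<Longrightarrow> x \<otimes> inv y \<in> H" for x y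
  proof -
    assume xy: "x \<in> carrier G" "y \<in> carrier G" "?p x = ?p y"
    have "x \<in> H #> x" by (rule rcos_self[OF xy(1) N.subgroup_axioms])
    then have "x \<in> H #> y" using xy by simp
    then show ?thesis by (rule N.rcos_module_imp[OF is_group xy(2)])
  qed
  have piM: "x \<in> ?M \<Longrightarrow> ?p x \<in> ?K" for x
  proof (induction rule: generate.induct)
    case one then show ?case using generate.one[of ?Q] by simp
  next
    case (incl h)
    then show ?case
    proof
      assume "h \<in> F" then show ?thesis by (intro generate.incl) blast
    next
      assume "h \<in> H" then show ?thesis using pone generate.one by metis
    qed
  next
    case (inv h)
    then show ?case
    proof
      assume h: "h \<in> F"
      then have "?p (inv h) = inv\<^bsub>?Q\<^esub> (?p h)" using F by (intro P.hom_inv) blast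
      then show ?thesis using h by (simp add: generate.inv)
    next
      assume "h \<in> H"
      then have "inv h \<in> H" by (rule N.m_inv_closed)
      then show ?thesis using pone generate.one by metis
    qed
  next
    case (eng h1 h2)
    have "?p (h1 \<otimes> h2) = ?p h1 \<otimes>\<^bsub>?Q\<^esub> ?p h2" using eng.hyps Mc by simp
    then show ?case using eng.IH generate.eng by metis
  qed
  have M0M: "?K \<subseteq> ?p ` ?M"
  proof -
    have "?K = ?p ` generate G F" using P.generate_img[OF F(2)] .
    also have "\<dots> \<subseteq> ?p ` ?M" by (intro image_mono mono_generate) blast
    finally show ?thesis .
  qed
  have ident: "a \<in> carrier G \<Longrightarrow> b \<in> carrier G \<Longrightarrow> a \<otimes> b = cm G a b \<otimes> (b \<otimes> a)" for a b
    by (simp add: cm_def m_assoc)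
  have commQ: "\<forall>u\<in>?K. \<forall>v\<in>?K. u \<otimes>\<^bsub>?Q\<^esub> v = v \<otimes>\<^bsub>?Q\<^esub> u"
  proof (intro ballI)
    fix u v assume "u \<in> ?K" "v \<in> ?K"
    then obtain a b where ab: "a \<in> ?M" "b \<in> ?M" "u = ?p a" "v = ?p b" using M0M by blast
    have ac: "a \<in> carrier G" "b \<in> carrier G" using ab Mc by auto
    have "u \<otimes>\<^bsub>?Q\<^esub> v = ?p (a \<otimes> b)" using ab ac by simp
    also have "\<dots> = ?p (cm G a b) \<otimes>\<^bsub>?Q\<^esub> ?p (b \<otimes> a)" using ident[OF ac] ac by simp
    also have "?p (cm G a b) = \<one>\<^bsub>?Q\<^esub>" using comm ab pone by blast
    also have "\<one>\<^bsub>?Q\<^esub> \<otimes>\<^bsub>?Q\<^esub> ?p (b \<otimes> a) = ?p (b \<otimes> a)"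
      by (rule P.H.l_one[OF P.hom_closed[OF m_closed[OF ac(2) ac(1)]]])
    also have "\<dots> = v \<otimes>\<^bsub>?Q\<^esub> u" using ab ac by simp
    finally show "u \<otimes>\<^bsub>?Q\<^esub> v = v \<otimes>\<^bsub>?Q\<^esub> u" .
  qed
  have pF: "?p ` F \<subseteq> carrier ?Q" using F by auto
  have finQ: "finite {q \<in> ?K. \<exists>m::nat. m > 0 \<and> q [^]\<^bsub>?Q\<^esub> m = \<one>\<^bsub>?Q\<^esub>}"
    using group.tors_finite[OF Qg finite_imageI[OF F(1)] pF commQ] .
  have pTM: "?p ` TM \<subseteq> {q \<in> ?K. \<exists>m::nat. m > 0 \<and> q [^]\<^bsub>?Q\<^esub> m = \<one>\<^bsub>?Q\<^esub>}"
  proof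
    fix q assume "q \<in> ?p ` TM"
    then obtain x m where x: "x \<in> ?M" "m > (0::nat)" "x [^] m \<in> H" "q = ?p x" unfolding TM_def by blast
    have "q [^]\<^bsub>?Q\<^esub> m = ?p (x [^] m)" using x Mc P.hom_nat_pow by simp
    also have "\<dots> = \<one>\<^bsub>?Q\<^esub>" using pone x by blast
    finally show "q \<in> {q \<in> ?K. \<exists>m::nat. m > 0 \<and> q [^]\<^bsub>?Q\<^esub> m = \<one>\<^bsub>?Q\<^esub>}" using x piM by blast
  qed
  have finP: "finite (?p ` TM)" using finite_subset[OF pTM finQ] .
  define rep where "rep q = (SOME x. x \<in> TM \<and> ?p x = q)" for q
  have rep: "q \<in> ?p ` TM \<Longrightarrow> rep q \<in> TM \<and> ?p (rep q) = q" for q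
    unfolding rep_def by (rule someI_ex) blast
  show ?thesis
  proof (intro exI conjI)
    show "finite (rep ` ?p ` TM)" using finP by (rule finite_imageI)
    show "rep ` ?p ` TM \<subseteq> {x \<in> ?M. \<exists>m::nat. m > 0 \<and> x [^] m \<in> H}"
      using rep unfolding TM_def by blast
    show "\<forall>x\<in>?M. (\<exists>m::nat. m > 0 \<and> x [^] m \<in> H) \<longrightarrow> (\<exists>r\<in>rep ` ?p ` TM. \<exists>h\<in>H. x = h \<otimes> r)"
    proof (intro ballI impI)
      fix x assume x: "x \<in> ?M" "\<exists>m::nat. m > 0 \<and> x [^] m \<in> H"
      then have xT: "x \<in> TM" unfolding TM_def by blast
      then have r: "rep (?p x) \<in> TM" "?p (rep (?p x)) = ?p x" using rep by blast+
      have xc: "x \<in> carrier G" "rep (?p x) \<in> carrier G" using x r Mc unfolding TM_def by auto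
      have "x \<otimes> inv (rep (?p x)) \<in> H" using peq[OF xc(1) xc(2)] r by simp
      moreover have "x = (x \<otimes> inv (rep (?p x))) \<otimes> rep (?p x)" using xc by (simp add: m_assoc)
      ultimately show "\<exists>r\<in>rep ` ?p ` TM. \<exists>h\<in>H. x = h \<otimes> r" using xT by blast
    qed
  qed
qed

end

context pgroup begin

lemma layer:
  assumes Hn: "H \<lhd> G" and Ks: "subgroup K G" and HK: "H \<subseteq> K"
    and phiK: "\<phi> ` K \<subseteq> K" and phiH: "\<phi> ` H \<subseteq> H"
    and cent: "\<forall>x\<in>carrier G. \<forall>y\<in>K. cm G x y \<in> H"
    and F: "finite F" "F \<subseteq> K" and KF: "K \<subseteq> generate G (F \<union> H)"
    and HP: "H \<subseteq> Pol"
    and U: "\<forall>x\<in>K. \<exists>m::nat. m > 0 \<and> ((\<lambda>x. \<phi> x \<otimes> inv x) ^^ k) x [^] m \<in> H"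
  shows "K \<subseteq> Pol"
proof -
  let ?M = "generate G (F \<union> H)"
  have Kc: "K \<subseteq> carrier G" by (rule subgroup.subset[OF Ks])
  have MK: "?M = K"
  proof
    show "?M \<subseteq> K" by (rule generate_subgroup_incl[OF _ Ks]) (use F HK in blast)
    show "K \<subseteq> ?M" by (rule KF)
  qed
  have Fc: "F \<subseteq> carrier G" using F Kc by blast
  have comm: "\<forall>a\<in>?M. \<forall>b\<in>?M. cm G a b \<in> H" using cent MK Kc by blast
  obtain R where R: "finite R" "R \<subseteq> {x \<in> ?M. \<exists>m::nat. m > 0 \<and> x [^] m \<in> H}"
    and cover: "\<forall>x\<in>?M. (\<exists>m::nat. m > 0 \<and> x [^] m \<in> H) \<longrightarrow> (\<exists>r\<in>R. \<exists>h\<in>H. x = h \<otimes> r)"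
    using rel_tors[OF Hn F(1) Fc comm] by blast
  have RK: "R \<subseteq> K" using R MK by blast
  have Rc: "R \<subseteq> carrier G" using RK Kc by blast
  define \<sigma> where "\<sigma> r = (SOME r'. r' \<in> R \<and> (\<exists>h\<in>H. \<phi> r = h \<otimes> r'))" for r
  have sig: "\<sigma> r \<in> R \<and> (\<exists>h\<in>H. \<phi> r = h \<otimes> \<sigma> r)" if r: "r \<in> R" for r
  proof -
    obtain m :: nat where m: "m > 0" "r [^] m \<in> H" using R r by blast
    have rc: "r \<in> carrier G" using r Rc by blast
    have "\<phi> r \<in> K" using phiK r RK by blast
    moreover have "\<phi> r [^] m \<in> H"
    proof -
      have "\<phi> (r [^] m) = \<phi> r [^] m" using rc by (induction m) auto
      then show ?thesis using phiH m by (metis image_eqI subsetD)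
    qed
    ultimately have "\<exists>r'\<in>R. \<exists>h\<in>H. \<phi> r = h \<otimes> r'" using cover MK m by blast
    then show ?thesis unfolding \<sigma>_def by (rule someI2_bex) blast
  qed
  have RP: "R \<subseteq> Pol"
  proof (rule Pol_growth[OF R(1) Rc])
    show "\<And>x. x \<in> R \<Longrightarrow> \<sigma> x \<in> R" using sig by blast
    show "\<And>x. x \<in> R \<Longrightarrow> \<exists>y\<in>Pol. \<phi> x = y \<otimes> \<sigma> x" using sig HP by blast
  qed
  have T: "x \<in> Pol" if x: "x \<in> K" "\<exists>m::nat. m > 0 \<and> x [^] m \<in> H" for x
  proof -
    obtain r h where rh: "r \<in> R" "h \<in> H" "x = h \<otimes> r" using cover x MK by blast
    then show ?thesis using Pol_mult RP HP by blast
  qed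
  let ?\<nu> = "\<lambda>x. \<phi> x \<otimes> inv x"
  have nuK: "x \<in> K \<Longrightarrow> ?\<nu> x \<in> K" for x
    using phiK subgroup.m_closed[OF Ks] subgroup.m_inv_closed[OF Ks] by blast
  have claim: "\<forall>x\<in>K. (\<exists>m::nat. m > 0 \<and> (?\<nu> ^^ j) x [^] m \<in> H) \<longrightarrow> x \<in> Pol" for j
  proof (induction j)
    case 0 then show ?case using T by simp
  next
    case (Suc j)
    show ?case
    proof (intro ballI impI)
      fix x assume x: "x \<in> K" and ex: "\<exists>m::nat. m > 0 \<and> (?\<nu> ^^ Suc j) x [^] m \<in> H"
      have xc: "x \<in> carrier G" using x Kc by blast
      have "(?\<nu> ^^ Suc j) x = (?\<nu> ^^ j) (?\<nu> x)" by (simp only: funpow_Suc_right comp_def)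
      then have "?\<nu> x \<in> Pol" using Suc.IH nuK[OF x] ex by metis
      have "{x} \<subseteq> Pol"
      proof (rule Pol_growth[of "{x}" id])
        show "finite {x}" by simp
        show "{x} \<subseteq> carrier G" using xc by simp
        show "\<And>y. y \<in> {x} \<Longrightarrow> id y \<in> {x}" by simp
        show "\<And>y. y \<in> {x} \<Longrightarrow> \<exists>z\<in>Pol. \<phi> y = z \<otimes> id y"
          using \<open>?\<nu> x \<in> Pol\<close> xc by (auto simp: m_assoc intro!: bexI[of _ "?\<nu> x"])
      qed
      then show "x \<in> Pol" by simp
    qed
  qed
  show ?thesis using claim[of k] U by blast
qed

end

primrec layer_gens :: "('a, 'b) monoid_scheme \<Rightarrow> 'a set \<Rightarrow> nat \<Rightarrow> 'a set" where
  "layer_gens G S 0 = S"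
| "layer_gens G S (Suc n) = (\<lambda>p. cm G (fst p) (snd p)) ` (S \<times> layer_gens G S n)"

declare lower_central.simps(2) [simp del]

context group begin

lemma lg_finite: "finite S \<Longrightarrow> finite (layer_gens G S n)"
  by (induction n) auto

lemma lg_sub: "S \<subseteq> carrier G \<Longrightarrow> layer_gens G S n \<subseteq> lower_central G n"
proof (induction n)
  case 0 then show ?case by simp
next
  case (Suc n)
  show ?case
  proof
    fix z assume "z \<in> layer_gens G S (Suc n)"
    then obtain a b where ab: "a \<in> S" "b \<in> layer_gens G S n" "z = cm G a b" by auto
    have "a \<in> carrier G" using ab Suc.prems by blast
    moreover have "b \<in> lower_central G n" using ab Suc.IH Suc.prems by blast
    ultimately show "z \<in> lower_central G (Suc n)" using ab lc_gen by simp
  qed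
qed

lemma conj_close:
  assumes W: "subgroup W G" and LW: "lower_central G (Suc m) \<subseteq> W"
    and w: "w \<in> W" "w \<in> lower_central G m" and x: "x \<in> carrier G"
  shows "x \<otimes> w \<otimes> inv x \<in> W"
proof -
  have wc: "w \<in> carrier G" using w(2) by (rule lc_carrier)
  have iw: "inv w \<in> lower_central G m" by (rule subgroup.m_inv_closed[OF lc_subgroup w(2)])
  have "cm G (inv w) x \<in> lower_central G (Suc m)" by (rule lc_gen'[OF x iw])
  then have c: "cm G (inv w) x \<in> W" using LW by blast
  have "x \<otimes> w \<otimes> inv x = w \<otimes> cm G (inv w) x" using wc x by (simp add: cm_def grp)
  then show ?thesis using subgroup.m_closed[OF W w(1) c] by simp
qed

lemma cm_one_right [simp]: "x \<in> carrier G \<Longrightarrow> cm G x \<one> = \<one>" by (simp add: cm_def)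
lemma cm_one_left [simp]: "y \<in> carrier G \<Longrightarrow> cm G \<one> y = \<one>" by (simp add: cm_def)

lemma cm_inv_right_id: "s \<in> carrier G \<Longrightarrow> h \<in> carrier G \<Longrightarrow> cm G s (inv h) = inv h \<otimes> inv (cm G s h) \<otimes> h"
  by (simp add: cm_def grp)
lemma cm_mult_right_id: "s \<in> carrier G \<Longrightarrow> h1 \<in> carrier G \<Longrightarrow> h2 \<in> carrier G \<Longrightarrow>
   cm G s (h1 \<otimes> h2) = cm G s h1 \<otimes> (h1 \<otimes> cm G s h2 \<otimes> inv h1)"
  by (simp add: cm_def grp)
lemma cm_inv_left_id: "s \<in> carrier G \<Longrightarrow> y \<in> carrier G \<Longrightarrow> cm G (inv s) y = inv s \<otimes> cm G y s \<otimes> s"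
  by (simp add: cm_def grp)
lemma cm_mult_left_id: "a \<in> carrier G \<Longrightarrow> b \<in> carrier G \<Longrightarrow> y \<in> carrier G \<Longrightarrow>
   cm G (a \<otimes> b) y = a \<otimes> cm G b y \<otimes> inv a \<otimes> cm G a y"
  by (simp add: cm_def grp)

lemma lg_gen:
  assumes S: "S \<subseteq> carrier G" and gen: "generate G S = carrier G"
  shows "lower_central G n \<subseteq> generate G (layer_gens G S n \<union> lower_central G (Suc n))"
proof (induction n)
  case 0
  have "carrier G = generate G S" using gen by simp
  also have "\<dots> \<subseteq> generate G (layer_gens G S 0 \<union> lower_central G (Suc 0))" by (intro mono_generate) auto
  finally show ?case by simp
next
  case (Suc n)
  let ?W = "generate G (layer_gens G S (Suc n) \<union> lower_central G (Suc (Suc n)))"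
  let ?V = "generate G (layer_gens G S n \<union> lower_central G (Suc n))"
  have Wsub: "layer_gens G S (Suc n) \<union> lower_central G (Suc (Suc n)) \<subseteq> carrier G"
    using lg_sub[OF S] lc_sub by blast
  have W: "subgroup ?W G" by (rule generate_is_subgroup[OF Wsub])
  have LW: "lower_central G (Suc (Suc n)) \<subseteq> ?W" by (rule subsetI, rule generate.incl) blast
  have FW: "layer_gens G S (Suc n) \<subseteq> ?W" by (rule subsetI, rule generate.incl) blast
  have VL: "?V \<subseteq> lower_central G n"
    by (rule generate_subgroup_incl[OF _ lc_subgroup]) (use lg_sub[OF S] lc_mono_Suc in blast)
  have stepA: "cm G s y \<in> ?W" if s: "s \<in> S" and y: "y \<in> ?V" for s y
    using y
  proof (induction rule: generate.induct)
    case one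
    have "s \<in> carrier G" using s S by blast
    then show ?case using generate.one[of G] by simp
  next
    case (incl h)
    then show ?case
    proof
      assume "h \<in> layer_gens G S n"
      then have "cm G s h \<in> layer_gens G S (Suc n)" using s by force
      then show ?thesis using FW by blast
    next
      assume "h \<in> lower_central G (Suc n)"
      then have "cm G s h \<in> lower_central G (Suc (Suc n))" using s S by (intro lc_gen) auto
      then show ?thesis using LW by blast
    qed
  next
    case (inv h)
    have sc: "s \<in> carrier G" using s S by blast
    from inv show ?case
    proof
      assume h: "h \<in> layer_gens G S n"
      have hL: "h \<in> lower_central G n" using h lg_sub[OF S] by blast
      have hc: "h \<in> carrier G" using hL by (rule lc_carrier)
      have c1: "cm G s h \<in> layer_gens G S (Suc n)" using s h by force
      have c2: "inv (cm G s h) \<in> ?W" using subgroup.m_inv_closed[OF W] c1 FW by blast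
      have c3: "inv (cm G s h) \<in> lower_central G (Suc n)"
        using subgroup.m_inv_closed[OF lc_subgroup lc_gen[OF sc hL]] .
      have "inv h \<otimes> inv (cm G s h) \<otimes> inv (inv h) \<in> ?W"
        by (rule conj_close[OF W LW c2 c3]) (use hc in simp)
      then show ?thesis using cm_inv_right_id[OF sc hc] hc by simp
    next
      assume h: "h \<in> lower_central G (Suc n)"
      have "inv h \<in> lower_central G (Suc n)" by (rule subgroup.m_inv_closed[OF lc_subgroup h])
      then have "cm G s (inv h) \<in> lower_central G (Suc (Suc n))" by (intro lc_gen[OF sc])
      then show ?thesis using LW by blast
    qed
  next
    case (eng h1 h2)
    have sc: "s \<in> carrier G" using s S by blast
    have h1L: "h1 \<in> lower_central G n" using eng.hyps(1) VL by blast
    have h2L: "h2 \<in> lower_central G n" using eng.hyps(2) VL by blast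
    have hc: "h1 \<in> carrier G" "h2 \<in> carrier G" using h1L h2L lc_carrier by blast+
    have "h1 \<otimes> cm G s h2 \<otimes> inv h1 \<in> ?W"
      by (rule conj_close[OF W LW eng.IH(2) lc_gen[OF sc h2L] hc(1)])
    then have "cm G s h1 \<otimes> (h1 \<otimes> cm G s h2 \<otimes> inv h1) \<in> ?W"
      using subgroup.m_closed[OF W eng.IH(1)] by blast
    then show ?case using cm_mult_right_id[OF sc hc] by simp
  qed
  have stepB: "cm G x y \<in> ?W" if x: "x \<in> generate G S" and y: "y \<in> lower_central G n" for x y
    using x
  proof (induction rule: generate.induct)
    case one then show ?case using y lc_carrier generate.one by auto
  next
    case (incl s) then show ?case using stepA y Suc.IH by blast
  next
    case (inv s)
    have sc: "s \<in> carrier G" using inv S by blast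
    have yc: "y \<in> carrier G" using y by (rule lc_carrier)
    have c1: "cm G s y \<in> ?W" using stepA inv y Suc.IH by blast
    have c2: "cm G y s \<in> ?W" using subgroup.m_inv_closed[OF W c1] cm_inv[OF sc yc] by simp
    have c3: "cm G y s \<in> lower_central G (Suc n)" by (rule lc_gen'[OF sc y])
    have "inv s \<otimes> cm G y s \<otimes> inv (inv s) \<in> ?W"
      by (rule conj_close[OF W LW c2 c3]) (use sc in simp)
    then show ?case using cm_inv_left_id[OF sc yc] sc by simp
  next
    case (eng a b)
    have ac: "a \<in> carrier G" "b \<in> carrier G" using eng.hyps gen by auto
    have yc: "y \<in> carrier G" using y by (rule lc_carrier)
    have "a \<otimes> cm G b y \<otimes> inv a \<in> ?W"
      by (rule conj_close[OF W LW eng.IH(2) lc_gen[OF ac(2) y] ac(1)])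
    then have "a \<otimes> cm G b y \<otimes> inv a \<otimes> cm G a y \<in> ?W"
      using subgroup.m_closed[OF W _ eng.IH(1)] by blast
    then show ?case using cm_mult_left_id[OF ac yc] by simp
  qed
  have eqL: "lower_central G (Suc n) = generate G (\<Union>x\<in>carrier G. \<Union>y\<in>lower_central G n. {x \<otimes> y \<otimes> inv x \<otimes> inv y})"
    by (rule lower_central.simps(2))
  have "generate G (\<Union>x\<in>carrier G. \<Union>y\<in>lower_central G n. {x \<otimes> y \<otimes> inv x \<otimes> inv y}) \<subseteq> ?W"
  proof (rule generate_subgroup_incl[OF _ W], clarify)
    fix x y assume "x \<in> carrier G" "y \<in> lower_central G n"
    then show "x \<otimes> y \<otimes> inv x \<otimes> inv y \<in> ?W" using stepB[of x y] gen unfolding cm_def by simp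
  qed
  with eqL show ?case by simp
qed

end

declare lower_central.simps(2) [simp del] mult_FactGroup [simp del] one_FactGroup [simp del]

context group begin

definition central_el :: "'a \<Rightarrow> bool" where
  "central_el z \<longleftrightarrow> z \<in> carrier G \<and> (\<forall>g\<in>carrier G. z \<otimes> g = g \<otimes> z)"

lemma central_carrier: "central_el z \<Longrightarrow> z \<in> carrier G" by (simp add: central_el_def)
lemma central_comm: "central_el z \<Longrightarrow> g \<in> carrier G \<Longrightarrow> z \<otimes> g = g \<otimes> z" by (simp add: central_el_def)

lemma central_inv: assumes "central_el z" shows "central_el (inv z)"
proof -
  have zc: "z \<in> carrier G" using assms central_carrier by blast
  have "inv z \<otimes> g = g \<otimes> inv z" if g: "g \<in> carrier G" for g
  proof -
    have "z \<otimes> g = g \<otimes> z" using central_comm[OF assms g] .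
    then have "inv z \<otimes> (z \<otimes> g) \<otimes> inv z = inv z \<otimes> (g \<otimes> z) \<otimes> inv z" by simp
    then show ?thesis using zc g by (simp add: m_assoc)
  qed
  then show ?thesis using zc by (simp add: central_el_def)
qed

lemma central_mult: assumes "central_el a" "central_el b" shows "central_el (a \<otimes> b)"
proof -
  have c: "a \<in> carrier G" "b \<in> carrier G" using assms central_carrier by blast+
  have "a \<otimes> b \<otimes> g = g \<otimes> (a \<otimes> b)" if g: "g \<in> carrier G" for g
  proof -
    have "a \<otimes> b \<otimes> g = a \<otimes> (g \<otimes> b)" using c g central_comm[OF assms(2) g] by (simp add: m_assoc)
    also have "\<dots> = (a \<otimes> g) \<otimes> b" using c g by (simp add: m_assoc)
    also have "\<dots> = g \<otimes> (a \<otimes> b)" using c g central_comm[OF assms(1) g] by (simp add: m_assoc)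
    finally show ?thesis .
  qed
  then show ?thesis using c by (simp add: central_el_def)
qed

lemma cm_eq_one_iff: "a \<in> carrier G \<Longrightarrow> b \<in> carrier G \<Longrightarrow> cm G a b = \<one> \<longleftrightarrow> a \<otimes> b = b \<otimes> a"
proof -
  assume c: "a \<in> carrier G" "b \<in> carrier G"
  have "cm G a b = (a \<otimes> b) \<otimes> inv (b \<otimes> a)" using c by (simp add: cm_def grp)
  then show ?thesis using c inv_solve_right'[of \<one> "a \<otimes> b" "b \<otimes> a"] by simp
qed

lemma cm_central_left: "central_el z \<Longrightarrow> g \<in> carrier G \<Longrightarrow> cm G z g = \<one>"
  using cm_eq_one_iff central_comm central_carrier by blast
lemma cm_central_right: "central_el z \<Longrightarrow> g \<in> carrier G \<Longrightarrow> cm G g z = \<one>"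
  using cm_eq_one_iff central_comm central_carrier by metis

lemma cm_left_central:
  assumes c: "a \<in> carrier G" "b \<in> carrier G" "y \<in> carrier G"
    and z: "central_el (cm G b y)" "central_el (cm G a y)"
  shows "cm G (a \<otimes> b) y = cm G a y \<otimes> cm G b y"
proof -
  have "cm G (a \<otimes> b) y = a \<otimes> cm G b y \<otimes> inv a \<otimes> cm G a y" using c by (rule cm_mult_left_id)
  also have "a \<otimes> cm G b y = cm G b y \<otimes> a" using central_comm[OF z(1) c(1)] by simp
  also have "cm G b y \<otimes> a \<otimes> inv a = cm G b y" using c by (simp add: m_assoc)
  also have "cm G b y \<otimes> cm G a y = cm G a y \<otimes> cm G b y" using central_comm[OF z(1)] c by simp
  finally show ?thesis .
qed

lemma cm_right_central:
  assumes c: "x \<in> carrier G" "y1 \<in> carrier G" "y2 \<in> carrier G"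
    and z: "central_el (cm G x y2)"
  shows "cm G x (y1 \<otimes> y2) = cm G x y1 \<otimes> cm G x y2"
proof -
  have "cm G x (y1 \<otimes> y2) = cm G x y1 \<otimes> (y1 \<otimes> cm G x y2 \<otimes> inv y1)" using c by (rule cm_mult_right_id)
  also have "y1 \<otimes> cm G x y2 = cm G x y2 \<otimes> y1" using central_comm[OF z c(2)] by simp
  also have "cm G x y2 \<otimes> y1 \<otimes> inv y1 = cm G x y2" using c by (simp add: m_assoc)
  finally show ?thesis .
qed

lemma central_rearr:
  assumes "central_el A" "central_el B" "central_el a" "central_el b"
  shows "(A \<otimes> B) \<otimes> inv (a \<otimes> b) = (A \<otimes> inv a) \<otimes> (B \<otimes> inv b)"
proof -
  have c: "A \<in> carrier G" "B \<in> carrier G" "a \<in> carrier G" "b \<in> carrier G" using assms central_carrier by blast+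
  have "(A \<otimes> B) \<otimes> inv (a \<otimes> b) = A \<otimes> ((B \<otimes> inv b) \<otimes> inv a)" using c by (simp add: grp)
  also have "(B \<otimes> inv b) \<otimes> inv a = inv a \<otimes> (B \<otimes> inv b)"
    using central_comm[OF central_inv[OF assms(3)]] c by simp
  finally show ?thesis using c by (simp add: m_assoc)
qed

lemma central_cancel3:
  assumes "central_el A" "central_el B" "central_el C" "central_el D"
  shows "(A \<otimes> B) \<otimes> (C \<otimes> D) \<otimes> inv D = A \<otimes> B \<otimes> C"
proof -
  have c: "A \<in> carrier G" "B \<in> carrier G" "C \<in> carrier G" "D \<in> carrier G" using assms central_carrier by blast+
  then show ?thesis by (simp add: m_assoc)
qed

end

context pgroup begin

definition nu :: "'a \<Rightarrow> 'a" where "nu x = \<phi> x \<otimes> inv x"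

lemma nu_closed [simp]: "x \<in> carrier G \<Longrightarrow> nu x \<in> carrier G" by (simp add: nu_def)

lemma phi_LC: "x \<in> lower_central G j \<Longrightarrow> \<phi> x \<in> lower_central G j"
  using lc_hom[OF phi] by blast

lemma nu_LC: "x \<in> lower_central G j \<Longrightarrow> nu x \<in> lower_central G j"
  unfolding nu_def using phi_LC subgroup.m_closed[OF lc_subgroup] subgroup.m_inv_closed[OF lc_subgroup] by blast

lemma nun_LC: "x \<in> lower_central G j \<Longrightarrow> (nu ^^ r) x \<in> lower_central G j"
  by (induction r) (auto intro: nu_LC)

lemma nun_closed [simp]: "x \<in> carrier G \<Longrightarrow> (nu ^^ r) x \<in> carrier G"
  by (induction r) auto

lemma nu_one [simp]: "nu \<one> = \<one>" by (simp add: nu_def)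
lemma nun_one [simp]: "(nu ^^ r) \<one> = \<one>" by (induction r) auto

lemma phi_nu: "x \<in> carrier G \<Longrightarrow> \<phi> x = nu x \<otimes> x" by (simp add: nu_def m_assoc)

lemma nun_Suc: "(nu ^^ Suc r) x = (nu ^^ r) (nu x)" by (simp only: funpow_Suc_right comp_def)

end

locale qctx = pgroup +
  fixes n :: nat
begin

abbreviation "K2 \<equiv> lower_central G (Suc (Suc n))"
abbreviation "Q \<equiv> G Mod lower_central G (Suc (Suc n))"
abbreviation "p \<equiv> r_coset G (lower_central G (Suc (Suc n)))"

lemma K2n: "K2 \<lhd> G" by (rule lc_normal)

lemma Qg: "group Q" by (rule normal.factorgroup_is_group[OF K2n])

lemma ph: "group_hom G Q p"
  by (rule group_hom.intro[OF is_group Qg]) (rule group_hom_axioms.intro[OF normal.r_coset_hom_Mod[OF K2n]])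

end

sublocale qctx \<subseteq> P: group_hom G "G Mod lower_central G (Suc (Suc n))" "r_coset G (lower_central G (Suc (Suc n)))"
  by (rule ph)

context qctx begin

lemma pone: "x \<in> carrier G \<Longrightarrow> p x = \<one>\<^bsub>Q\<^esub> \<longleftrightarrow> x \<in> K2"
proof
  assume x: "x \<in> carrier G" and "p x = \<one>\<^bsub>Q\<^esub>"
  then have "p x = K2" by (simp add: one_FactGroup)
  moreover have "x \<in> p x" by (rule rcos_self[OF x lc_subgroup])
  ultimately show "x \<in> K2" by simp
next
  assume "x \<in> K2"
  then show "p x = \<one>\<^bsub>Q\<^esub>" using subgroup.rcos_const[OF lc_subgroup is_group] by (simp add: one_FactGroup)
qed

lemma pcm: "x \<in> carrier G \<Longrightarrow> y \<in> carrier G \<Longrightarrow> p (cm G x y) = cm Q (p x) (p y)"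
  by (simp add: cm_def)

lemma p_eq_iff: "x \<in> carrier G \<Longrightarrow> y \<in> carrier G \<Longrightarrow> p x = p y \<longleftrightarrow> x \<otimes> inv y \<in> K2"
proof -
  assume c: "x \<in> carrier G" "y \<in> carrier G"
  have e1: "p (x \<otimes> inv y) = p x \<otimes>\<^bsub>Q\<^esub> inv\<^bsub>Q\<^esub> (p y)" using c by simp
  have e2: "x \<otimes> inv y \<in> K2 \<longleftrightarrow> p (x \<otimes> inv y) = \<one>\<^bsub>Q\<^esub>"
    using pone[OF m_closed[OF c(1) inv_closed[OF c(2)]]] by simp
  have e3: "p x \<otimes>\<^bsub>Q\<^esub> inv\<^bsub>Q\<^esub> (p y) = \<one>\<^bsub>Q\<^esub> \<longleftrightarrow> p x = p y"
    using P.H.inv_solve_right'[of "\<one>\<^bsub>Q\<^esub>" "p x" "p y"] c by simp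
  show ?thesis using e1 e2 e3 by simp
qed

lemma p_central: "z \<in> lower_central G (Suc n) \<Longrightarrow> P.H.central_el (p z)"
proof -
  assume z: "z \<in> lower_central G (Suc n)"
  have zc: "z \<in> carrier G" using z by (rule lc_carrier)
  have "p z \<otimes>\<^bsub>Q\<^esub> g = g \<otimes>\<^bsub>Q\<^esub> p z" if g: "g \<in> carrier Q" for g
  proof -
    obtain x where x: "x \<in> carrier G" "g = p x" using g by (auto simp: carrier_FactGroup)
    have "cm G x z \<in> K2" by (rule lc_gen[OF x(1) z])
    then have "p (cm G x z) = \<one>\<^bsub>Q\<^esub>" using pone[of "cm G x z"] x zc by simp
    then have "cm Q (p x) (p z) = \<one>\<^bsub>Q\<^esub>" using pcm[OF x(1) zc] by simp
    then have "p x \<otimes>\<^bsub>Q\<^esub> p z = p z \<otimes>\<^bsub>Q\<^esub> p x" using P.H.cm_eq_one_iff x zc by simp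
    then show ?thesis using x by simp
  qed
  then show ?thesis using zc by (simp add: P.H.central_el_def)
qed


lemma sub_pow: "subgroup H G \<Longrightarrow> h \<in> H \<Longrightarrow> h [^] (m::nat) \<in> H"
  by (induction m) (auto intro: subgroup.m_closed subgroup.one_closed)

lemma pphi_cong: assumes c: "x \<in> carrier G" "y \<in> carrier G" and e: "p x = p y" shows "p (\<phi> x) = p (\<phi> y)"
proof -
  have "x \<otimes> inv y \<in> K2" using p_eq_iff[OF c] e by simp
  then have "\<phi> (x \<otimes> inv y) \<in> K2" by (rule phi_LC)
  then have "\<phi> x \<otimes> inv (\<phi> y) \<in> K2" using c by simp
  then show ?thesis using p_eq_iff c by simp
qed

lemma pnu_eq: "x \<in> carrier G \<Longrightarrow> p (nu x) = p (\<phi> x) \<otimes>\<^bsub>Q\<^esub> inv\<^bsub>Q\<^esub> (p x)"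
  by (simp add: nu_def)

lemma pnu_cong: assumes c: "x \<in> carrier G" "y \<in> carrier G" and e: "p x = p y" shows "p (nu x) = p (nu y)"
  using pnu_eq[OF c(1)] pnu_eq[OF c(2)] pphi_cong[OF c e] e by simp

lemma pnu_add: assumes u: "u \<in> lower_central G (Suc n)" and v: "v \<in> lower_central G (Suc n)"
  shows "p (nu (u \<otimes> v)) = p (nu u) \<otimes>\<^bsub>Q\<^esub> p (nu v)"
proof -
  have uc: "u \<in> carrier G" "v \<in> carrier G" using u v lc_carrier by blast+
  have "p (nu (u \<otimes> v)) = (p (\<phi> u) \<otimes>\<^bsub>Q\<^esub> p (\<phi> v)) \<otimes>\<^bsub>Q\<^esub> inv\<^bsub>Q\<^esub> (p u \<otimes>\<^bsub>Q\<^esub> p v)"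
    using uc by (simp add: nu_def)
  also have "\<dots> = (p (\<phi> u) \<otimes>\<^bsub>Q\<^esub> inv\<^bsub>Q\<^esub> (p u)) \<otimes>\<^bsub>Q\<^esub> (p (\<phi> v) \<otimes>\<^bsub>Q\<^esub> inv\<^bsub>Q\<^esub> (p v))"
    by (rule P.H.central_rearr) (use p_central phi_LC u v in auto)
  also have "\<dots> = p (nu u) \<otimes>\<^bsub>Q\<^esub> p (nu v)" using uc by (simp add: nu_def)
  finally show ?thesis .
qed

lemma pnun_add: "u \<in> lower_central G (Suc n) \<Longrightarrow> v \<in> lower_central G (Suc n) \<Longrightarrow>
   p ((nu ^^ r) (u \<otimes> v)) = p ((nu ^^ r) u) \<otimes>\<^bsub>Q\<^esub> p ((nu ^^ r) v)"
proof (induction r)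
  case 0
  then show ?case using lc_carrier by simp
next
  case (Suc r)
  have c: "u \<in> carrier G" "v \<in> carrier G" using Suc.prems lc_carrier by blast+
  have L: "(nu ^^ r) u \<in> lower_central G (Suc n)" "(nu ^^ r) v \<in> lower_central G (Suc n)"
    using Suc.prems nun_LC by blast+
  have Lc: "(nu ^^ r) u \<in> carrier G" "(nu ^^ r) v \<in> carrier G" using c by simp_all
  have "p ((nu ^^ r) (u \<otimes> v)) = p ((nu ^^ r) u \<otimes> (nu ^^ r) v)" using Suc.IH[OF Suc.prems] Lc by simp
  then have "p (nu ((nu ^^ r) (u \<otimes> v))) = p (nu ((nu ^^ r) u \<otimes> (nu ^^ r) v))"
    by (rule pnu_cong[rotated 2]) (use c Lc in simp_all)
  also have "\<dots> = p (nu ((nu ^^ r) u)) \<otimes>\<^bsub>Q\<^esub> p (nu ((nu ^^ r) v))" by (rule pnu_add[OF L])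
  finally show ?case by simp
qed

lemma pnun_pow: "u \<in> lower_central G (Suc n) \<Longrightarrow> p ((nu ^^ r) (u [^] (m::nat))) = p ((nu ^^ r) u) [^]\<^bsub>Q\<^esub> m"
proof (induction m)
  case 0 then show ?case by simp
next
  case (Suc m)
  have um: "u [^] m \<in> lower_central G (Suc n)" by (rule sub_pow[OF lc_subgroup Suc.prems])
  have c: "u \<in> carrier G" using Suc.prems lc_carrier by blast
  have "p ((nu ^^ r) (u [^] Suc m)) = p ((nu ^^ r) (u [^] m \<otimes> u))" by simp
  also have "\<dots> = p ((nu ^^ r) (u [^] m)) \<otimes>\<^bsub>Q\<^esub> p ((nu ^^ r) u)" by (rule pnun_add[OF um Suc.prems])
  also have "\<dots> = p ((nu ^^ r) u) [^]\<^bsub>Q\<^esub> Suc m" using Suc.IH[OF Suc.prems] by simp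
  finally show ?case .
qed

lemma pnun_inv: assumes u: "u \<in> lower_central G (Suc n)"
  shows "p ((nu ^^ r) (inv u)) = inv\<^bsub>Q\<^esub> (p ((nu ^^ r) u))"
proof -
  have c: "u \<in> carrier G" using u lc_carrier by blast
  have iu: "inv u \<in> lower_central G (Suc n)" by (rule subgroup.m_inv_closed[OF lc_subgroup u])
  have "p ((nu ^^ r) (inv u \<otimes> u)) = p ((nu ^^ r) (inv u)) \<otimes>\<^bsub>Q\<^esub> p ((nu ^^ r) u)" by (rule pnun_add[OF iu u])
  then have "p ((nu ^^ r) (inv u)) \<otimes>\<^bsub>Q\<^esub> p ((nu ^^ r) u) = \<one>\<^bsub>Q\<^esub>" using c by simp
  then show ?thesis using c by (intro P.H.inv_equality[symmetric]) simp_all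
qed

lemma pnun_cong: "x \<in> carrier G \<Longrightarrow> y \<in> carrier G \<Longrightarrow> p x = p y \<Longrightarrow> p ((nu ^^ r) x) = p ((nu ^^ r) y)"
proof (induction r)
  case 0 then show ?case by simp
next
  case (Suc r) then show ?case using pnu_cong[of "(nu ^^ r) x" "(nu ^^ r) y"] by simp
qed

definition Nset :: "nat \<Rightarrow> 'a set" where
  "Nset r = {z \<in> lower_central G (Suc n). \<exists>m::nat. m > 0 \<and> p ((nu ^^ r) z) [^]\<^bsub>Q\<^esub> m = \<one>\<^bsub>Q\<^esub>}"

lemma N_subgroup: "subgroup (Nset r) G"
proof (rule subgroupI)
  show "Nset r \<subseteq> carrier G" unfolding Nset_def using lc_carrier by blast
  have "\<one> \<in> Nset r" unfolding Nset_def using subgroup.one_closed[OF lc_subgroup]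
    by (auto intro!: exI[of _ "1::nat"])
  then show "Nset r \<noteq> {}" by blast
next
  fix u assume "u \<in> Nset r"
  then obtain m :: nat where u: "u \<in> lower_central G (Suc n)" "m > 0" "p ((nu ^^ r) u) [^]\<^bsub>Q\<^esub> m = \<one>\<^bsub>Q\<^esub>"
    unfolding Nset_def by blast
  have c: "u \<in> carrier G" using u lc_carrier by blast
  have iu: "inv u \<in> lower_central G (Suc n)" by (rule subgroup.m_inv_closed[OF lc_subgroup u(1)])
  have "p ((nu ^^ r) (inv u)) [^]\<^bsub>Q\<^esub> m = inv\<^bsub>Q\<^esub> (p ((nu ^^ r) u) [^]\<^bsub>Q\<^esub> m)"
    using pnun_inv[OF u(1)] c by (simp add: P.H.nat_pow_inv)
  also have "\<dots> = \<one>\<^bsub>Q\<^esub>" using u by simp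
  finally show "inv u \<in> Nset r" unfolding Nset_def using iu u by blast
next
  fix u v assume "u \<in> Nset r" "v \<in> Nset r"
  then obtain m1 m2 :: nat where u: "u \<in> lower_central G (Suc n)" "m1 > 0" "p ((nu ^^ r) u) [^]\<^bsub>Q\<^esub> m1 = \<one>\<^bsub>Q\<^esub>"
    and v: "v \<in> lower_central G (Suc n)" "m2 > 0" "p ((nu ^^ r) v) [^]\<^bsub>Q\<^esub> m2 = \<one>\<^bsub>Q\<^esub>"
    unfolding Nset_def by blast
  have c: "u \<in> carrier G" "v \<in> carrier G" using u v lc_carrier by blast+
  let ?A = "p ((nu ^^ r) u)" and ?B = "p ((nu ^^ r) v)"
  have Ac: "?A \<in> carrier Q" "?B \<in> carrier Q" using c by simp_all
  have cen: "P.H.central_el ?A" using p_central nun_LC u(1) by blast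
  have uv: "u \<otimes> v \<in> lower_central G (Suc n)" by (rule subgroup.m_closed[OF lc_subgroup u(1) v(1)])
  have "p ((nu ^^ r) (u \<otimes> v)) [^]\<^bsub>Q\<^esub> (m1 * m2) = (?A \<otimes>\<^bsub>Q\<^esub> ?B) [^]\<^bsub>Q\<^esub> (m1 * m2)"
    using pnun_add[OF u(1) v(1)] by simp
  also have "\<dots> = ?A [^]\<^bsub>Q\<^esub> (m1 * m2) \<otimes>\<^bsub>Q\<^esub> ?B [^]\<^bsub>Q\<^esub> (m1 * m2)"
    by (rule P.H.pow_mult_distrib[OF P.H.central_comm[OF cen Ac(2)] Ac])
  also have "\<dots> = (?A [^]\<^bsub>Q\<^esub> m1) [^]\<^bsub>Q\<^esub> m2 \<otimes>\<^bsub>Q\<^esub> (?B [^]\<^bsub>Q\<^esub> m2) [^]\<^bsub>Q\<^esub> m1"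
    using Ac by (simp add: P.H.nat_pow_pow mult.commute)
  also have "\<dots> = \<one>\<^bsub>Q\<^esub>" using u v by simp
  finally have "p ((nu ^^ r) (u \<otimes> v)) [^]\<^bsub>Q\<^esub> (m1 * m2) = \<one>\<^bsub>Q\<^esub>" .
  moreover have "m1 * m2 > 0" using u v by simp
  ultimately show "u \<otimes> v \<in> Nset r" unfolding Nset_def using uv by blast
qed

lemma N_mono: assumes z: "z \<in> Nset r" shows "z \<in> Nset (Suc r)"
proof -
  obtain m :: nat where m: "z \<in> lower_central G (Suc n)" "m > 0" "p ((nu ^^ r) z) [^]\<^bsub>Q\<^esub> m = \<one>\<^bsub>Q\<^esub>"
    using z unfolding Nset_def by blast
  let ?w = "(nu ^^ r) z"
  have wL: "?w \<in> lower_central G (Suc n)" using nun_LC m(1) by blast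
  have wc: "?w \<in> carrier G" using wL lc_carrier by blast
  have "p (?w [^] m) = \<one>\<^bsub>Q\<^esub>" using m wc by (simp add: P.hom_nat_pow)
  then have "p (?w [^] m) = p \<one>" by simp
  then have "p (nu (?w [^] m)) = p (nu \<one>)" using wc by (intro pnu_cong) simp_all
  then have "p ((nu ^^ 1) (?w [^] m)) = \<one>\<^bsub>Q\<^esub>" by simp
  then have "p ((nu ^^ 1) ?w) [^]\<^bsub>Q\<^esub> m = \<one>\<^bsub>Q\<^esub>" using pnun_pow[OF wL, of 1 m] by simp
  then have "p ((nu ^^ Suc r) z) [^]\<^bsub>Q\<^esub> m = \<one>\<^bsub>Q\<^esub>" by simp
  then show ?thesis unfolding Nset_def using m by blast
qed

lemma N_mono_le: "r \<le> s \<Longrightarrow> Nset r \<subseteq> Nset s"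
proof (induction s rule: dec_induct)
  case base then show ?case by simp
next
  case (step k) then show ?case using N_mono by blast
qed

lemma N_step: "z \<in> lower_central G (Suc n) \<Longrightarrow> nu z \<in> Nset r \<Longrightarrow> z \<in> Nset (Suc r)"
  unfolding Nset_def nun_Suc by blast

lemma N_cong: assumes z: "z \<in> Nset r" and z': "z' \<in> lower_central G (Suc n)" and e: "p z = p z'"
  shows "z' \<in> Nset r"
proof -
  have c: "z \<in> carrier G" "z' \<in> carrier G" using z z' lc_carrier unfolding Nset_def by blast+
  have "p ((nu ^^ r) z) = p ((nu ^^ r) z')" by (rule pnun_cong[OF c e])
  then show ?thesis using z z' unfolding Nset_def by simp
qed


lemma K2_conj: "h \<in> K2 \<Longrightarrow> g \<in> carrier G \<Longrightarrow> g \<otimes> h \<otimes> inv g \<in> K2"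
  by (rule normal.inv_op_closed2[OF lc_normal])

lemma K2_mult: "a \<in> K2 \<Longrightarrow> b \<in> K2 \<Longrightarrow> a \<otimes> b \<in> K2"
  by (rule subgroup.m_closed[OF lc_subgroup])

lemma K2_inv: "a \<in> K2 \<Longrightarrow> inv a \<in> K2"
  by (rule subgroup.m_inv_closed[OF lc_subgroup])

lemma hw_gen: assumes a: "a \<in> carrier G" and b: "b \<in> carrier G" and c: "c \<in> lower_central G n"
  shows "cm G (cm G a b) c \<in> K2"
proof -
  have cc: "c \<in> carrier G" using c lc_carrier by blast
  have ic: "inv c \<in> lower_central G n" by (rule subgroup.m_inv_closed[OF lc_subgroup c])
  let ?T1 = "inv a \<otimes> cm G (cm G a b) c \<otimes> a"
  let ?T2 = "c \<otimes> cm G (cm G (inv c) (inv a)) b \<otimes> inv c"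
  let ?T3 = "b \<otimes> cm G (cm G (inv b) c) (inv a) \<otimes> inv b"
  have hw: "?T1 \<otimes> ?T2 \<otimes> ?T3 = \<one>" using hall_witt[of "inv b" a "inv c"] a b cc by simp
  have w2: "cm G (inv c) (inv a) \<in> lower_central G (Suc n)" by (rule lc_gen'[OF _ ic]) (use a in simp)
  have "cm G (cm G (inv c) (inv a)) b \<in> K2" by (rule lc_gen'[OF b w2])
  then have T2: "?T2 \<in> K2" using K2_conj cc by (metis inv_inv)
  have w3: "cm G (inv b) c \<in> lower_central G (Suc n)" by (rule lc_gen[OF _ c]) (use b in simp)
  have "cm G (cm G (inv b) c) (inv a) \<in> K2" by (rule lc_gen'[OF _ w3]) (use a in simp)
  then have T3: "?T3 \<in> K2" using K2_conj b by (metis inv_inv inv_closed)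
  have T1c: "?T1 \<in> carrier G" "?T2 \<in> carrier G" "?T3 \<in> carrier G" using a b cc by simp_all
  have "?T1 = inv (?T2 \<otimes> ?T3)"
    using hw T1c by (metis inv_equality m_assoc m_closed)
  then have T1: "?T1 \<in> K2" using K2_inv K2_mult T2 T3 by simp
  have "a \<otimes> ?T1 \<otimes> inv a \<in> K2" by (rule K2_conj[OF T1 a])
  moreover have "a \<otimes> ?T1 \<otimes> inv a = cm G (cm G a b) c" using a b cc by (simp add: m_assoc)
  ultimately show ?thesis by simp
qed

lemma tsl: assumes d: "d \<in> lower_central G (Suc 0)" shows "\<forall>y\<in>lower_central G n. cm G d y \<in> K2"
proof -
  have "d \<in> generate G (\<Union>x\<in>carrier G. \<Union>y\<in>lower_central G 0. {x \<otimes> y \<otimes> inv x \<otimes> inv y})"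
    using d by (simp only: lower_central.simps(2))
  then show ?thesis
  proof (induction rule: generate.induct)
    case one then show ?case using lc_carrier subgroup.one_closed[OF lc_subgroup] by simp
  next
    case (incl h)
    then obtain a b where ab: "a \<in> carrier G" "b \<in> carrier G" "h = cm G a b" by (auto simp: cm_def)
    then show ?case using hw_gen by blast
  next
    case (inv h)
    then obtain a b where ab: "a \<in> carrier G" "b \<in> carrier G" "h = cm G a b" by (auto simp: cm_def)
    have hc: "h \<in> carrier G" using ab by simp
    show ?case
    proof
      fix y assume y: "y \<in> lower_central G n"
      have yc: "y \<in> carrier G" using y lc_carrier by blast
      have "cm G h y \<in> K2" using hw_gen ab y by blast
      then have "cm G y h \<in> K2" using K2_inv cm_inv[OF hc yc] by metis
      then have "inv h \<otimes> cm G y h \<otimes> inv (inv h) \<in> K2" by (rule K2_conj) (use hc in simp)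
      then show "cm G (inv h) y \<in> K2" using cm_inv_left_id[OF hc yc] hc by simp
    qed
  next
    case (eng h1 h2)
    have hc: "h1 \<in> carrier G" "h2 \<in> carrier G"
      using eng.hyps generate_incl[of "\<Union>x\<in>carrier G. \<Union>y\<in>lower_central G 0. {x \<otimes> y \<otimes> inv x \<otimes> inv y}"]
      by auto
    show ?case
    proof
      fix y assume y: "y \<in> lower_central G n"
      have yc: "y \<in> carrier G" using y lc_carrier by blast
      have "h1 \<otimes> cm G h2 y \<otimes> inv h1 \<in> K2" using eng.IH(2) y hc K2_conj by blast
      then have "h1 \<otimes> cm G h2 y \<otimes> inv h1 \<otimes> cm G h1 y \<in> K2" using eng.IH(1) y K2_mult by blast
      then show "cm G (h1 \<otimes> h2) y \<in> K2" using cm_mult_left_id[OF hc yc] by simp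
    qed
  qed
qed

lemma pcm_central: "x \<in> carrier G \<Longrightarrow> y \<in> lower_central G n \<Longrightarrow> P.H.central_el (p (cm G x y))"
  using p_central lc_gen by blast

lemma BL: assumes x: "x \<in> carrier G" "x' \<in> carrier G" and y: "y \<in> lower_central G n"
  shows "p (cm G (x \<otimes> x') y) = p (cm G x y) \<otimes>\<^bsub>Q\<^esub> p (cm G x' y)"
proof -
  have yc: "y \<in> carrier G" using y lc_carrier by blast
  have "p (cm G (x \<otimes> x') y) = cm Q (p x \<otimes>\<^bsub>Q\<^esub> p x') (p y)" using pcm x yc by simp
  also have "\<dots> = cm Q (p x) (p y) \<otimes>\<^bsub>Q\<^esub> cm Q (p x') (p y)"
    using P.H.cm_left_central[of "p x" "p x'" "p y"] pcm_central[OF x(1) y] pcm_central[OF x(2) y]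
      pcm x yc by simp
  also have "\<dots> = p (cm G x y) \<otimes>\<^bsub>Q\<^esub> p (cm G x' y)" using pcm x yc by simp
  finally show ?thesis .
qed

lemma BR: assumes x: "x \<in> carrier G" and y: "y \<in> lower_central G n" "y' \<in> lower_central G n"
  shows "p (cm G x (y \<otimes> y')) = p (cm G x y) \<otimes>\<^bsub>Q\<^esub> p (cm G x y')"
proof -
  have yc: "y \<in> carrier G" "y' \<in> carrier G" using y lc_carrier by blast+
  have "p (cm G x (y \<otimes> y')) = cm Q (p x) (p y \<otimes>\<^bsub>Q\<^esub> p y')" using pcm x yc by simp
  also have "\<dots> = cm Q (p x) (p y) \<otimes>\<^bsub>Q\<^esub> cm Q (p x) (p y')"
    using P.H.cm_right_central[of "p x" "p y" "p y'"] pcm_central[OF x y(2)] pcm x yc by simp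
  also have "\<dots> = p (cm G x y) \<otimes>\<^bsub>Q\<^esub> p (cm G x y')" using pcm x yc by simp
  finally show ?thesis .
qed

lemma BLpow: assumes x: "x \<in> carrier G" and y: "y \<in> lower_central G n"
  shows "p (cm G (x [^] (m::nat)) y) = p (cm G x y) [^]\<^bsub>Q\<^esub> m"
proof (induction m)
  case 0 then show ?case using y lc_carrier by (simp add: cm_def)
next
  case (Suc m)
  have "p (cm G (x [^] Suc m) y) = p (cm G (x [^] m \<otimes> x) y)" by simp
  also have "\<dots> = p (cm G (x [^] m) y) \<otimes>\<^bsub>Q\<^esub> p (cm G x y)" by (rule BL) (use x y in simp_all)
  finally show ?case using Suc.IH by simp
qed

lemma BRpow: assumes x: "x \<in> carrier G" and y: "y \<in> lower_central G n"
  shows "p (cm G x (y [^] (m::nat))) = p (cm G x y) [^]\<^bsub>Q\<^esub> m"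
proof (induction m)
  case 0 then show ?case using x by (simp add: cm_def)
next
  case (Suc m)
  have ym: "y [^] m \<in> lower_central G n" by (rule sub_pow[OF lc_subgroup y])
  have "p (cm G x (y [^] Suc m)) = p (cm G x (y [^] m \<otimes> y))" by simp
  also have "\<dots> = p (cm G x (y [^] m)) \<otimes>\<^bsub>Q\<^esub> p (cm G x y)" by (rule BR[OF x ym y])
  finally show ?case using Suc.IH by simp
qed

lemma main_claim:
  "\<forall>a b x y. a + b = s \<longrightarrow> x \<in> carrier G \<longrightarrow> (\<exists>m::nat. m > 0 \<and> (nu ^^ a) x [^] m \<in> lower_central G (Suc 0)) \<longrightarrow>
     y \<in> lower_central G n \<longrightarrow> (\<exists>m::nat. m > 0 \<and> (nu ^^ b) y [^] m \<in> lower_central G (Suc n)) \<longrightarrow>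
     cm G x y \<in> Nset s"
proof (induction s rule: less_induct)
  case (less s)
  show ?case
  proof (intro allI impI)
    fix a b x y
    assume s: "a + b = s" and x: "x \<in> carrier G" and hx: "\<exists>m::nat. m > 0 \<and> (nu ^^ a) x [^] m \<in> lower_central G (Suc 0)"
      and y: "y \<in> lower_central G n" and hy: "\<exists>m::nat. m > 0 \<and> (nu ^^ b) y [^] m \<in> lower_central G (Suc n)"
    have yc: "y \<in> carrier G" using y lc_carrier by blast
    have cxy: "cm G x y \<in> lower_central G (Suc n)" by (rule lc_gen[OF x y])
    have cxyc: "cm G x y \<in> carrier G" using x yc by simp
    show "cm G x y \<in> Nset s"
    proof (cases "a = 0 \<or> b = 0")
      case True
      have "cm G x y \<in> Nset 0"
      proof (cases "a = 0")
        case True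
        then obtain m :: nat where m: "m > 0" "x [^] m \<in> lower_central G (Suc 0)" using hx by auto
        have "p (cm G x y) [^]\<^bsub>Q\<^esub> m = p (cm G (x [^] m) y)" using BLpow[OF x y] by simp
        also have "\<dots> = \<one>\<^bsub>Q\<^esub>" using tsl[OF m(2)] y pone x yc by simp
        finally show ?thesis unfolding Nset_def using cxy m by auto
      next
        case False
        then have "b = 0" using \<open>a = 0 \<or> b = 0\<close> by simp
        then obtain m :: nat where m: "m > 0" "y [^] m \<in> lower_central G (Suc n)" using hy by auto
        have "p (cm G x y) [^]\<^bsub>Q\<^esub> m = p (cm G x (y [^] m))" using BRpow[OF x y] by simp
        also have "\<dots> = \<one>\<^bsub>Q\<^esub>" using lc_gen[OF x m(2)] pone x yc by simp
        finally show ?thesis unfolding Nset_def using cxy m by auto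
      qed
      then show ?thesis using N_mono_le[of 0 s] by blast
    next
      case False
      then obtain a' b' where ab: "a = Suc a'" "b = Suc b'" by (metis not0_implies_Suc)
      have nx: "nu x \<in> carrier G" using x by simp
      have ny: "nu y \<in> lower_central G n" using nu_LC y by blast
      have nyc: "nu y \<in> carrier G" using yc by simp
      have hnx: "\<exists>m::nat. m > 0 \<and> (nu ^^ a') (nu x) [^] m \<in> lower_central G (Suc 0)"
        using hx ab nun_Suc by metis
      have hny: "\<exists>m::nat. m > 0 \<and> (nu ^^ b') (nu y) [^] m \<in> lower_central G (Suc n)"
        using hy ab nun_Suc by metis
      define s' where "s' = a' + Suc b'"
      have s's: "s = Suc s'" using s ab s'_def by simp
      have IH: "\<And>a b x y. a + b < s \<Longrightarrow> x \<in> carrier G \<Longrightarrow> (\<exists>m::nat. m > 0 \<and> (nu ^^ a) x [^] m \<in> lower_central G (Suc 0)) \<Longrightarrow>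
         y \<in> lower_central G n \<Longrightarrow> (\<exists>m::nat. m > 0 \<and> (nu ^^ b) y [^] m \<in> lower_central G (Suc n)) \<Longrightarrow>
         cm G x y \<in> Nset (a + b)"
        using less.IH by blast
      have A: "cm G (nu x) (nu y) \<in> Nset s'"
        using IH[OF _ nx hnx ny hny] N_mono_le[of "a' + b'" s'] s's s'_def ab s by force
      have B: "cm G (nu x) y \<in> Nset s'"
        using IH[OF _ nx hnx y hy] s's s'_def ab s by force
      have C: "cm G x (nu y) \<in> Nset s'"
        using IH[OF _ x hx ny hny] s's s'_def ab s by force
      let ?w = "cm G (nu x) (nu y) \<otimes> cm G (nu x) y \<otimes> cm G x (nu y)"
      have w: "?w \<in> Nset s'" using A B C subgroup.m_closed[OF N_subgroup] by blast
      have nyy: "nu y \<otimes> y \<in> lower_central G n" by (rule subgroup.m_closed[OF lc_subgroup ny y])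
      have "\<phi> (cm G x y) = cm G (\<phi> x) (\<phi> y)" using x yc by (simp add: cm_def)
      also have "\<dots> = cm G (nu x \<otimes> x) (nu y \<otimes> y)" by (simp only: phi_nu[OF x] phi_nu[OF yc])
      finally have phic: "\<phi> (cm G x y) = cm G (nu x \<otimes> x) (nu y \<otimes> y)" .
      have "p (cm G (nu x \<otimes> x) (nu y \<otimes> y)) = p (cm G (nu x) (nu y \<otimes> y)) \<otimes>\<^bsub>Q\<^esub> p (cm G x (nu y \<otimes> y))"
        by (rule BL[OF nx x nyy])
      also have "\<dots> = (p (cm G (nu x) (nu y)) \<otimes>\<^bsub>Q\<^esub> p (cm G (nu x) y)) \<otimes>\<^bsub>Q\<^esub>
                      (p (cm G x (nu y)) \<otimes>\<^bsub>Q\<^esub> p (cm G x y))"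
        using BR[OF nx ny y] BR[OF x ny y] by simp
      finally have e1: "p (\<phi> (cm G x y)) = (p (cm G (nu x) (nu y)) \<otimes>\<^bsub>Q\<^esub> p (cm G (nu x) y)) \<otimes>\<^bsub>Q\<^esub>
                      (p (cm G x (nu y)) \<otimes>\<^bsub>Q\<^esub> p (cm G x y))" using phic by simp
      have "p (nu (cm G x y)) = p (\<phi> (cm G x y)) \<otimes>\<^bsub>Q\<^esub> inv\<^bsub>Q\<^esub> (p (cm G x y))"
        by (rule pnu_eq[OF cxyc])
      also have "\<dots> = p (cm G (nu x) (nu y)) \<otimes>\<^bsub>Q\<^esub> p (cm G (nu x) y) \<otimes>\<^bsub>Q\<^esub> p (cm G x (nu y))"
        unfolding e1 by (rule P.H.central_cancel3) (use pcm_central nx x ny y in auto)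
      also have "\<dots> = p ?w" using nx x nyc yc by simp
      finally have e2: "p ?w = p (nu (cm G x y))" by simp
      have "nu (cm G x y) \<in> Nset s'" by (rule N_cong[OF w nu_LC[OF cxy] e2])
      then have "cm G x y \<in> Nset (Suc s')" by (rule N_step[OF cxy])
      then show ?thesis using s's by simp
    qed
  qed
qed

lemma propagate:
  assumes U1: "\<forall>x\<in>carrier G. \<exists>m::nat. m > 0 \<and> (nu ^^ k1) x [^] m \<in> lower_central G (Suc 0)"
    and Un: "\<forall>y\<in>lower_central G n. \<exists>m::nat. m > 0 \<and> (nu ^^ k2) y [^] m \<in> lower_central G (Suc n)"
  shows "\<forall>z\<in>lower_central G (Suc n). \<exists>m::nat. m > 0 \<and> (nu ^^ (k1 + k2)) z [^] m \<in> K2"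
proof -
  have eqL: "lower_central G (Suc n) = generate G (\<Union>x\<in>carrier G. \<Union>y\<in>lower_central G n. {x \<otimes> y \<otimes> inv x \<otimes> inv y})"
    by (rule lower_central.simps(2))
  have "generate G (\<Union>x\<in>carrier G. \<Union>y\<in>lower_central G n. {x \<otimes> y \<otimes> inv x \<otimes> inv y}) \<subseteq> Nset (k1 + k2)"
  proof (rule generate_subgroup_incl[OF _ N_subgroup], clarify)
    fix x y assume x: "x \<in> carrier G" and y: "y \<in> lower_central G n"
    have "cm G x y \<in> Nset (k1 + k2)" using main_claim U1 Un x y by blast
    then show "x \<otimes> y \<otimes> inv x \<otimes> inv y \<in> Nset (k1 + k2)" by (simp add: cm_def)
  qed
  then have sub: "lower_central G (Suc n) \<subseteq> Nset (k1 + k2)" using eqL by simp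
  show ?thesis
  proof
    fix z assume z: "z \<in> lower_central G (Suc n)"
    then obtain m :: nat where m: "m > 0" "p ((nu ^^ (k1 + k2)) z) [^]\<^bsub>Q\<^esub> m = \<one>\<^bsub>Q\<^esub>"
      using sub unfolding Nset_def by blast
    have zc: "(nu ^^ (k1 + k2)) z \<in> carrier G" using z lc_carrier by simp
    have "p ((nu ^^ (k1 + k2)) z [^] m) = \<one>\<^bsub>Q\<^esub>" using m zc by (simp add: P.hom_nat_pow)
    then have "(nu ^^ (k1 + k2)) z [^] m \<in> K2" using pone zc by simp
    then show "\<exists>m::nat. m > 0 \<and> (nu ^^ (k1 + k2)) z [^] m \<in> K2" using m by blast
  qed
qed

end

declare lower_central.simps(2) [simp del]

context pgroup begin

lemma LC1_derived: "lower_central G (Suc 0) = derived G (carrier G)"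
  by (simp add: lower_central.simps derived_def)

lemma U1_from_ru:
  assumes iso: "\<phi> \<in> iso G G" and ru: "rationally_unipotent (abelianization G) (induced_ab \<phi>)"
  shows "\<exists>k. \<forall>x\<in>carrier G. \<exists>m::nat. m > 0 \<and> (nu ^^ k) x [^] m \<in> lower_central G (Suc 0)"
proof -
  let ?D = "lower_central G (Suc 0)"
  let ?A = "G Mod lower_central G (Suc 0)"
  interpret N: normal ?D G by (rule lc_normal)
  have Dc: "?D \<subseteq> carrier G" by (rule lc_sub)
  have abel: "abelianization G = ?A" by (simp add: abelianization_def LC1_derived)
  have phiD: "\<phi> ` ?D = ?D"
  proof
    show "\<phi> ` ?D \<subseteq> ?D" by (rule lc_hom[OF phi])
    let ?\<psi> = "inv_into (carrier G) \<phi>"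
    have psi: "?\<psi> \<in> iso G G" by (rule iso_set_sym[OF iso])
    then have psih: "?\<psi> \<in> hom G G" by (simp add: iso_def)
    have bij: "bij_betw \<phi> (carrier G) (carrier G)" using iso by (simp add: iso_def)
    show "?D \<subseteq> \<phi> ` ?D"
    proof
      fix d assume d: "d \<in> ?D"
      have dc: "d \<in> carrier G" using d Dc by blast
      have "?\<psi> d \<in> ?D" using lc_hom[OF psih] d by blast
      moreover have "\<phi> (?\<psi> d) = d" using bij dc by (simp add: bij_betw_def f_inv_into_f)
      ultimately show "d \<in> \<phi> ` ?D" by (metis image_eqI)
    qed
  qed
  have coset: "induced_ab \<phi> (?D #> x) = ?D #> \<phi> x" if x: "x \<in> carrier G" for x
  proof -
    have e: "\<And>h. h \<in> ?D \<Longrightarrow> \<phi> (h \<otimes> x) = \<phi> h \<otimes> \<phi> x" using x Dc by auto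
    have "\<phi> ` (?D #> x) = (\<phi> ` ?D) #> \<phi> x"
    proof
      show "\<phi> ` (?D #> x) \<subseteq> (\<phi> ` ?D) #> \<phi> x" using e by (auto simp: r_coset_def)
      show "(\<phi> ` ?D) #> \<phi> x \<subseteq> \<phi> ` (?D #> x)"
      proof
        fix y assume "y \<in> (\<phi> ` ?D) #> \<phi> x"
        then obtain h where h: "h \<in> ?D" "y = \<phi> h \<otimes> \<phi> x" by (auto simp: r_coset_def)
        then have "y = \<phi> (h \<otimes> x)" using e by simp
        moreover have "h \<otimes> x \<in> ?D #> x" using h by (auto simp: r_coset_def)
        ultimately show "y \<in> \<phi> ` (?D #> x)" by blast
      qed
    qed
    then show ?thesis unfolding induced_ab_def phiD .
  qed
  let ?\<psi>' = "\<lambda>C. induced_ab \<phi> C \<otimes>\<^bsub>?A\<^esub> inv\<^bsub>?A\<^esub> C"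
  have step: "?\<psi>' (?D #> x) = ?D #> nu x" if x: "x \<in> carrier G" for x
  proof -
    have xA: "?D #> x \<in> carrier ?A" using x by (auto simp: carrier_FactGroup)
    have "?\<psi>' (?D #> x) = (?D #> \<phi> x) <#> set_inv (?D #> x)"
      using coset[OF x] N.inv_FactGroup[OF xA] by (simp add: mult_FactGroup)
    also have "\<dots> = (?D #> \<phi> x) <#> (?D #> inv x)" using N.rcos_inv[OF x] by simp
    also have "\<dots> = ?D #> (\<phi> x \<otimes> inv x)" using x by (simp add: N.rcos_sum)
    finally show ?thesis by (simp add: nu_def)
  qed
  have iter: "(?\<psi>' ^^ k) (?D #> x) = ?D #> (nu ^^ k) x" if x: "x \<in> carrier G" for x k
  proof (induction k)
    case 0 then show ?case by simp
  next
    case (Suc k) then show ?case using step x by simp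
  qed
  obtain k where k: "\<forall>c\<in>carrier ?A. \<exists>m::nat. m > 0 \<and> (?\<psi>' ^^ k) c [^]\<^bsub>?A\<^esub> m = \<one>\<^bsub>?A\<^esub>"
    using ru unfolding rationally_unipotent_def abel by blast
  have "\<forall>x\<in>carrier G. \<exists>m::nat. m > 0 \<and> (nu ^^ k) x [^] m \<in> ?D"
  proof
    fix x assume x: "x \<in> carrier G"
    have xA: "?D #> x \<in> carrier ?A" using x by (auto simp: carrier_FactGroup)
    obtain m :: nat where m: "m > 0" "(?\<psi>' ^^ k) (?D #> x) [^]\<^bsub>?A\<^esub> m = \<one>\<^bsub>?A\<^esub>" using k xA by blast
    let ?w = "(nu ^^ k) x"
    have wc: "?w \<in> carrier G" using x by simp
    have "?D #> (?w [^] m) = ?D" using m(2) iter[OF x] N.FactGroup_pow[OF wc] by (simp add: one_FactGroup)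
    moreover have "?w [^] m \<in> ?D #> (?w [^] m)" by (rule rcos_self) (use wc N.subgroup_axioms in auto)
    ultimately have "?w [^] m \<in> ?D" by simp
    then show "\<exists>m::nat. m > 0 \<and> (nu ^^ k) x [^] m \<in> ?D" using m by blast
  qed
  then show ?thesis by blast
qed

lemma all_U:
  assumes U1: "\<exists>k. \<forall>x\<in>carrier G. \<exists>m::nat. m > 0 \<and> (nu ^^ k) x [^] m \<in> lower_central G (Suc 0)"
  shows "\<exists>k. \<forall>y\<in>lower_central G j. \<exists>m::nat. m > 0 \<and> (nu ^^ k) y [^] m \<in> lower_central G (Suc j)"
proof (induction j)
  case 0 then show ?case using U1 by simp
next
  case (Suc j)
  obtain k1 where k1: "\<forall>x\<in>carrier G. \<exists>m::nat. m > 0 \<and> (nu ^^ k1) x [^] m \<in> lower_central G (Suc 0)"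
    using U1 by blast
  obtain k2 where k2: "\<forall>y\<in>lower_central G j. \<exists>m::nat. m > 0 \<and> (nu ^^ k2) y [^] m \<in> lower_central G (Suc j)"
    using Suc.IH by blast
  interpret Qc: qctx G S \<phi> j by unfold_locales
  show ?case using Qc.propagate[OF k1 k2] by blast
qed

lemma nu_lambda: "(\<lambda>x. \<phi> x \<otimes> inv x) = nu" by (rule ext) (simp add: nu_def)

lemma all_Pol:
  assumes fin: "finite S" and nil: "lower_central G c = {\<one>}"
    and U1: "\<exists>k. \<forall>x\<in>carrier G. \<exists>m::nat. m > 0 \<and> (nu ^^ k) x [^] m \<in> lower_central G (Suc 0)"
  shows "carrier G \<subseteq> Pol"
proof -
  have "lower_central G (c - i) \<subseteq> Pol" for i
  proof (induction i)
    case 0 then show ?case using nil Pol_one by simp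
  next
    case (Suc i)
    show ?case
    proof (cases "c - Suc i = c - i")
      case True then show ?thesis using Suc.IH by simp
    next
      case False
      define j where "j = c - Suc i"
      have jj: "Suc j = c - i" using False unfolding j_def by simp
      obtain k where k: "\<forall>y\<in>lower_central G j. \<exists>m::nat. m > 0 \<and> (nu ^^ k) y [^] m \<in> lower_central G (Suc j)"
        using all_U[OF U1] by blast
      have "lower_central G j \<subseteq> Pol"
      proof (rule layer)
        show "lower_central G (Suc j) \<lhd> G" by (rule lc_normal)
        show "subgroup (lower_central G j) G" by (rule lc_subgroup)
        show "lower_central G (Suc j) \<subseteq> lower_central G j" by (rule lc_mono_Suc)
        show "\<phi> ` lower_central G j \<subseteq> lower_central G j" by (rule lc_hom[OF phi])
        show "\<phi> ` lower_central G (Suc j) \<subseteq> lower_central G (Suc j)" by (rule lc_hom[OF phi])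
        show "\<forall>x\<in>carrier G. \<forall>y\<in>lower_central G j. cm G x y \<in> lower_central G (Suc j)" using lc_gen by blast
        show "finite (layer_gens G S j)" by (rule lg_finite[OF fin])
        show "layer_gens G S j \<subseteq> lower_central G j" by (rule lg_sub[OF S_sub])
        show "lower_central G j \<subseteq> generate G (layer_gens G S j \<union> lower_central G (Suc j))"
          by (rule lg_gen[OF S_sub gen])
        show "lower_central G (Suc j) \<subseteq> Pol" using Suc.IH jj by simp
        show "\<forall>x\<in>lower_central G j. \<exists>m::nat. m > 0 \<and> ((\<lambda>x. \<phi> x \<otimes> inv x) ^^ k) x [^] m \<in> lower_central G (Suc j)"
          unfolding nu_lambda by (rule k)
      qed
      then show ?thesis unfolding j_def .
    qed
  qed
  from this[of c] show ?thesis by simp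
qed

end

lemma lim_lemma: "(C::real) > 0 \<Longrightarrow> (\<lambda>n. (C * (real n + 1) ^ d) powr (1 / real n)) \<longlonglongrightarrow> 1"
  by real_asymp

theorem corollary1p5:
  fixes N :: "('a, 'b) monoid_scheme" and \<phi> :: "'a \<Rightarrow> 'a" and S :: "'a set"
  assumes "group N"
    and "finitely_generated_group N"
    and "torsion_free_group N"
    and "nilpotent_group N"
    and "carrier N \<noteq> {\<one>\<^bsub>N\<^esub>}"
    and "\<phi> \<in> iso N N"
    and "rationally_unipotent (abelianization N) (induced_ab \<phi>)"
    and "finite S" and "S \<subseteq> carrier N" and "generate N S = carrier N"
  shows "(\<forall>s \<in> S. convergent (growth_seq N S \<phi> s)) \<and> aut_entropy N S \<phi> = 1"
proof -
  note A = assms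
  interpret pgroup N S \<phi>
    by (rule pgroup.intro[OF A(1)], rule pgroup_axioms.intro[OF A(9) A(10)]) (use A(6) in \<open>simp add: iso_def\<close>)
  obtain c where c: "lower_central N c = {\<one>\<^bsub>N\<^esub>}" using A(4) unfolding nilpotent_group_def by blast
  have Pol: "carrier N \<subseteq> Pol" by (rule all_Pol[OF A(8) c U1_from_ru[OF A(6) A(7)]])
  have inj: "inj_on \<phi> (carrier N)" using A(6) by (simp add: iso_def bij_betw_def)
  have phin_ne: "(\<phi> ^^ n) s \<noteq> \<one>\<^bsub>N\<^esub>" if s: "s \<in> carrier N" "s \<noteq> \<one>\<^bsub>N\<^esub>" for s n
  proof (induction n)
    case 0 then show ?case using s by simp
  next
    case (Suc n)
    have c: "(\<phi> ^^ n) s \<in> carrier N" using s by simp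
    show ?case
    proof
      assume "(\<phi> ^^ Suc n) s = \<one>\<^bsub>N\<^esub>"
      then have "\<phi> ((\<phi> ^^ n) s) = \<phi> \<one>\<^bsub>N\<^esub>" by simp
      then have "(\<phi> ^^ n) s = \<one>\<^bsub>N\<^esub>" by (rule inj_onD[OF inj _ c]) simp
      then show False using Suc.IH by simp
    qed
  qed
  have lim_s: "growth_seq N S \<phi> s \<longlonglongrightarrow> (if s = \<one>\<^bsub>N\<^esub> then 0 else 1)" if s: "s \<in> S" for s
  proof (cases "s = \<one>\<^bsub>N\<^esub>")
    case True
    then have "growth_seq N S \<phi> s = (\<lambda>n. 0)" by (simp add: growth_seq_def wl_one fun_eq_iff)
    then show ?thesis using True by simp
  next
    case False
    have sc: "s \<in> carrier N" using s A(9) by blast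
    obtain C d where Cd: "\<forall>n. word_length N S ((\<phi> ^^ n) s) \<le> C * (Suc n) ^ d"
      using Pol sc unfolding Pol_def by blast
    have ge1: "1 \<le> word_length N S ((\<phi> ^^ n) s)" for n using wl_pos phin_ne[OF sc False] sc by simp
    have Cpos: "C > 0" using Cd[rule_format, of 0] ge1[of 0] by (cases C) auto
    have low: "1 \<le> growth_seq N S \<phi> s n" for n
      unfolding growth_seq_def using ge1[of n] by (intro ge_one_powr_ge_zero) auto
    have up: "growth_seq N S \<phi> s n \<le> (real C * (real n + 1) ^ d) powr (1 / real n)" for n
    proof -
      have "real (word_length N S ((\<phi> ^^ n) s)) \<le> real (C * (Suc n) ^ d)" by (rule of_nat_mono) (rule Cd[rule_format])
      also have "\<dots> = real C * (real n + 1) ^ d" by (simp add: add.commute)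
      finally show ?thesis unfolding growth_seq_def by (intro powr_mono2) auto
    qed
    have "(\<lambda>n. (real C * (real n + 1) ^ d) powr (1 / real n)) \<longlonglongrightarrow> 1"
      by (rule lim_lemma) (use Cpos in simp)
    then have "growth_seq N S \<phi> s \<longlonglongrightarrow> 1"
      by (rule tendsto_sandwich[rotated 2, OF tendsto_const]) (use low up in auto)
    then show ?thesis using False by simp
  qed
  have conv: "\<forall>s\<in>S. convergent (growth_seq N S \<phi> s)" using lim_s by (blast intro: convergentI)
  have limv: "lim (growth_seq N S \<phi> s) = (if s = \<one>\<^bsub>N\<^esub> then 0 else 1)" if "s \<in> S" for s
    using lim_s[OF that] by (rule limI)
  obtain s0 where s0: "s0 \<in> S" "s0 \<noteq> \<one>\<^bsub>N\<^esub>"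
  proof (rule ccontr)
    assume "\<not> thesis"
    then have "S \<subseteq> {\<one>\<^bsub>N\<^esub>}" using that by blast
    then have "generate N S \<subseteq> generate N {\<one>\<^bsub>N\<^esub>}" by (rule mono_generate)
    then have "carrier N \<subseteq> {\<one>\<^bsub>N\<^esub>}" using A(10) generate_one by simp
    then show False using A(5) by blast
  qed
  have "aut_entropy N S \<phi> = 1"
    unfolding aut_entropy_def
  proof (rule Max_eqI)
    show "finite ((\<lambda>s. lim (growth_seq N S \<phi> s)) ` S)" using A(8) by simp
    show "\<And>y. y \<in> (\<lambda>s. lim (growth_seq N S \<phi> s)) ` S \<Longrightarrow> y \<le> 1" using limv by auto
    show "1 \<in> (\<lambda>s. lim (growth_seq N S \<phi> s)) ` S" using limv[OF s0(1)] s0 by (metis image_eqI)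
  qed
  then show ?thesis using conv by blast
qed

end
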